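(* There exist constants $A,B,\bar\delta>0$ and $\lambda<1$ such that for every $\delta\in[0,\bar\delta)$, every $n\ge0$ and every $f\in\mathcal{B}$, $$\|\mathcal{L}_\delta^nf\|_s\le A\lambda^n\|f\|_s+B\|f\|_{L^1}.$$
   Context: Let $b:\mathbb{R}^d\to\mathbb{R}^d$ satisfy (A) local Lipschitz continuity: for each $x_0\in\mathbb{R}^d$ there are $K>0$, $\delta_0>0$ with $|b(x_0)-b(x)|\le K|x_0-x|$ whenever $|x_0-x|<\delta_0$; and (B) dissipativity: there are $c_1\in\mathbb{R}$, $c_2>0$ with $\langle b(x),x\rangle\le c_1-c_2|x|^2$ for all $x\in\mathbb{R}^d$. Let $X^x_t$ be the solution of $dX_t^x=b(X_t^x)\,dt+dW_t$, $X_0^x=x$, with $W$ a standard Brownian motion in $\mathbb{R}^d$, and let $\theta_t$ be the flow of $\dot\theta=b(\theta)$. It is known that the law of $X_1^x$ has a density $\kappa(x,y)$ (in $y$, w.r.t. Lebesgue measure), continuous in $(x,y)$, and that there are constants $\lambda_0,\lambda_1\in(0,1]$, $C_0,C_1\ge 1$ such that for all $x,y$: $C_0^{-1}e^{-|\theta_1(x)-y|^2/\lambda_0}\le\kappa(x,y)\le C_0e^{-\lambda_0|\theta_1(x)-y|^2}$ and $|\nabla_x\kappa(x,y)|,|\nabla_y\kappa(x,y)|\le C_1e^{-\lambda_1|\theta_1(x)-y|^2}$. The transfer operator $\mathcal{L}=\mathcal{L}_0:L^1(\mathbb{R}^d)\to L^1(\mathbb{R}^d)$ is $\mathcal{L}f(y)=\int_{\mathbb{R}^d}\kappa(x,y)f(x)\,dx$.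 Spaces: for $\alpha\ge0$ let $\rho_\alpha(x)=(1+|x|^2)^{\alpha/2}$ and let $L^1_\alpha$ be the space of measurable $f:\mathbb{R}^d\to\mathbb{R}$ with $\|f\|_{L^1_\alpha}=\int\rho_\alpha(x)|f(x)|\,dx<\infty$. Fix a compact set $D\subset\mathbb{R}^d$ (a compact neighbourhood of $0$). The strong norm is $\|f\|_s=\|f\|_{L^1_2}+\|1_Df\|_{L^2}$ and the strong space is $\mathcal{B}=\{f\in L^1_2:\|f\|_s<\infty\}$. Set $V_{\mathcal{B}}=\{f\in\mathcal{B}:\int f\,dx=0\}$ and $V_{L^1}=\{f\in L^1:\int f\,dx=0\}$. Perturbations: fix $\bar\delta>0$. For $\delta\in[0,\bar\delta)$ let $\kappa_\delta=\kappa+\delta\dot\kappa+r_\delta$, where $\dot\kappa,r_\delta\in L^2(D\times D)$ (extended by zero outside $D\times D$), $r_0=0$, and $\|r_\delta\|_{L^2}=o(\delta)$ as $\delta\to0$. Define $\mathcal{L}_\delta f(y)=\int\kappa_\delta(x,y)f(x)\,dx$ and $\dot{\mathcal{L}}f(y)=\int\dot\kappa(x,y)f(x)\,dx$. Standing assumption: every $\mathcal{L}_\delta$, $\delta\in[0,\bar\delta)$, is integral preserving, i.e. $\int\mathcal{L}_\delta g\,dy=\int g\,dx$ for all $g\in L^1$. *)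

theory Defs
  imports "HOL-Probability.Probability"
begin

definition rho :: "real \<Rightarrow> 'a::euclidean_space \<Rightarrow> real" where
  "rho \<alpha> x = (1 + (norm x)\<^sup>2) powr (\<alpha> / 2)"

definition in_B :: "'a::euclidean_space set \<Rightarrow> ('a \<Rightarrow> real) \<Rightarrow> bool" where
  "in_B D f \<longleftrightarrow> f \<in> borel_measurable lborel
     \<and> integrable lborel (\<lambda>x. rho 2 x * f x)
     \<and> integrable lborel (\<lambda>x. (indicator D x * f x)\<^sup>2)"

definition L1_norm :: "('a::euclidean_space \<Rightarrow> real) \<Rightarrow> real" where
  "L1_norm f = (\<integral>x. \<bar>f x\<bar> \<partial>lborel)"

definition L1w_norm :: "real \<Rightarrow> ('a::euclidean_space \<Rightarrow> real) \<Rightarrow> real" where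
  "L1w_norm \<alpha> f = (\<integral>x. rho \<alpha> x * \<bar>f x\<bar> \<partial>lborel)"

definition L2_norm :: "('a::euclidean_space \<Rightarrow> real) \<Rightarrow> real" where
  "L2_norm f = sqrt (\<integral>x. (f x)\<^sup>2 \<partial>lborel)"

definition s_norm :: "'a::euclidean_space set \<Rightarrow> ('a \<Rightarrow> real) \<Rightarrow> real" where
  "s_norm D f = L1w_norm 2 f + L2_norm (\<lambda>x. indicator D x * f x)"

definition kernel_L2_norm :: "('a::euclidean_space \<Rightarrow> 'a \<Rightarrow> real) \<Rightarrow> real" where
  "kernel_L2_norm k = sqrt (\<integral>z. (k (fst z) (snd z))\<^sup>2 \<partial>(lborel \<Otimes>\<^sub>M lborel))"

definition transfer_op :: "('a::euclidean_space \<Rightarrow> 'a \<Rightarrow> real) \<Rightarrow> ('a \<Rightarrow> real) \<Rightarrow> 'a \<Rightarrow> real" where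
  "transfer_op k f y = (\<integral>x. k x y * f x \<partial>lborel)"

definition gauss_dens :: "real \<Rightarrow> 'a::euclidean_space \<Rightarrow> real" where
  "gauss_dens t x = (2 * pi * t) powr (- real DIM('a) / 2) * exp (- (norm x)\<^sup>2 / (2 * t))"

definition std_BM :: "'p measure \<Rightarrow> (real \<Rightarrow> 'p \<Rightarrow> 'a::euclidean_space) \<Rightarrow> bool" where
  "std_BM M W \<longleftrightarrow> prob_space M
     \<and> (\<forall>t\<ge>0. W t \<in> borel_measurable M)
     \<and> (\<forall>\<omega>\<in>space M. W 0 \<omega> = 0 \<and> continuous_on {0..} (\<lambda>t. W t \<omega>))
     \<and> (\<forall>s t. 0 \<le> s \<and> s < t \<longrightarrow>
           distributed M lborel (\<lambda>\<omega>. W t \<omega> - W s \<omega>) (\<lambda>x. ennreal (gauss_dens (t - s) x)))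
     \<and> (\<forall>(ts::nat \<Rightarrow> real) n. 0 \<le> ts 0 \<and> (\<forall>i<n. ts i \<le> ts (Suc i)) \<longrightarrow>
           prob_space.indep_vars M (\<lambda>_. borel) (\<lambda>i \<omega>. W (ts (Suc i)) \<omega> - W (ts i) \<omega>) {..<n})"

definition solves_SDE :: "'p measure \<Rightarrow> ('a::euclidean_space \<Rightarrow> 'a) \<Rightarrow> (real \<Rightarrow> 'p \<Rightarrow> 'a)
     \<Rightarrow> 'a \<Rightarrow> (real \<Rightarrow> 'p \<Rightarrow> 'a) \<Rightarrow> bool" where
  "solves_SDE M b W x X \<longleftrightarrow>
     (\<forall>\<omega>\<in>space M. continuous_on {0..} (\<lambda>t. X t \<omega>)
        \<and> (\<forall>t\<ge>0. X t \<omega> = x + integral {0..t} (\<lambda>s. b (X s \<omega>)) + W t \<omega>))"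

definition is_flow :: "('a::euclidean_space \<Rightarrow> 'a) \<Rightarrow> (real \<Rightarrow> 'a \<Rightarrow> 'a) \<Rightarrow> bool" where
  "is_flow b \<theta> \<longleftrightarrow> (\<forall>x. \<theta> 0 x = x \<and>
     (\<forall>t\<ge>0. ((\<lambda>s. \<theta> s x) has_vector_derivative b (\<theta> t x)) (at t within {0..})))"

end

theory Submission
  imports Defs
begin

definition kmeas :: "('a::euclidean_space \<Rightarrow> 'a \<Rightarrow> real) \<Rightarrow> bool" where
  "kmeas k \<longleftrightarrow> (\<lambda>z. k (fst z) (snd z)) \<in> borel_measurable (lborel \<Otimes>\<^sub>M lborel)"

lemma kmeas_swap:
  assumes "kmeas k"
  shows "(\<lambda>z. k (snd z) (fst z)) \<in> borel_measurable (lborel \<Otimes>\<^sub>M lborel)"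
proof -
  have "(\<lambda>z. (snd z, fst z)) \<in> (lborel \<Otimes>\<^sub>M lborel) \<rightarrow>\<^sub>M (lborel \<Otimes>\<^sub>M (lborel::'a measure))"
    by measurable
  from measurable_compose[OF this assms[unfolded kmeas_def]] show ?thesis by simp
qed

lemma kmeas_split:
  assumes "kmeas k"
  shows "case_prod k \<in> borel_measurable (lborel \<Otimes>\<^sub>M lborel)"
  using assms unfolding kmeas_def by (simp add: case_prod_beta')

lemma kmeas_sect1:
  assumes "kmeas k" shows "(\<lambda>x. k x y) \<in> borel_measurable borel"
proof -
  have "(\<lambda>x. (x, y)) \<in> borel \<rightarrow>\<^sub>M (lborel \<Otimes>\<^sub>M (lborel::'a measure))" by measurable
  from measurable_compose[OF this assms[unfolded kmeas_def]] show ?thesis by simp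
qed

lemma kmeas_sect2:
  assumes "kmeas k" shows "(\<lambda>y. k x y) \<in> borel_measurable borel"
proof -
  have "(\<lambda>y. (x, y)) \<in> borel \<rightarrow>\<^sub>M (lborel \<Otimes>\<^sub>M (lborel::'a measure))" by measurable
  from measurable_compose[OF this assms[unfolded kmeas_def]] show ?thesis by simp
qed

lemma transfer_op_meas:
  assumes "kmeas k" and [measurable]: "u \<in> borel_measurable lborel"
  shows "transfer_op k u \<in> borel_measurable lborel"
proof -
  have [measurable]: "(\<lambda>z. k (snd z) (fst z)) \<in> borel_measurable (lborel \<Otimes>\<^sub>M lborel)"
    using kmeas_swap[OF assms(1)] .
  have "case_prod (\<lambda>y x. k x y * u x) \<in> borel_measurable (lborel \<Otimes>\<^sub>M lborel)"
    unfolding case_prod_beta' by measurable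
  then show ?thesis unfolding transfer_op_def[abs_def]
    by (rule lborel.borel_measurable_lebesgue_integral)
qed

lemma transfer_op_bound:
  "ennreal \<bar>transfer_op k u y\<bar> \<le> (\<integral>\<^sup>+x. ennreal \<bar>k x y * u x\<bar> \<partial>lborel)"
proof (cases "integrable lborel (\<lambda>x. k x y * u x)")
  case True
  then show ?thesis unfolding transfer_op_def using integral_norm_bound_ennreal[OF True] by simp
next
  case False
  then show ?thesis unfolding transfer_op_def by (simp add: not_integrable_integral_eq)
qed

lemma transfer_op_tonelli:
  assumes "kmeas k" and [measurable]: "u \<in> borel_measurable lborel" "w \<in> borel_measurable lborel"
    and w: "\<And>y. w y \<ge> 0"
  shows "(\<integral>\<^sup>+y. ennreal (w y * \<bar>transfer_op k u y\<bar>) \<partial>lborel)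
     \<le> (\<integral>\<^sup>+x. ennreal \<bar>u x\<bar> * (\<integral>\<^sup>+y. ennreal (w y * \<bar>k x y\<bar>) \<partial>lborel) \<partial>lborel)"
proof -
  have [measurable]: "(\<lambda>z. k (fst z) (snd z)) \<in> borel_measurable (lborel \<Otimes>\<^sub>M lborel)"
    using assms(1) unfolding kmeas_def .
  have [measurable]: "\<And>y. (\<lambda>x. k x y) \<in> borel_measurable borel" "\<And>x. (\<lambda>y. k x y) \<in> borel_measurable borel"
    using kmeas_sect1[OF assms(1)] kmeas_sect2[OF assms(1)] by auto
  have "(\<integral>\<^sup>+y. ennreal (w y * \<bar>transfer_op k u y\<bar>) \<partial>lborel)
     \<le> (\<integral>\<^sup>+y. ennreal (w y) * (\<integral>\<^sup>+x. ennreal \<bar>k x y * u x\<bar> \<partial>lborel) \<partial>lborel)"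
    using w by (intro nn_integral_mono) (auto simp: ennreal_mult intro!: mult_left_mono transfer_op_bound)
  also have "\<dots> = (\<integral>\<^sup>+y. (\<integral>\<^sup>+x. ennreal (w y * \<bar>k x y\<bar> * \<bar>u x\<bar>) \<partial>lborel) \<partial>lborel)"
    using w by (subst nn_integral_cmult[symmetric]) (auto simp: ennreal_mult[symmetric] abs_mult mult.assoc)
  also have "\<dots> = (\<integral>\<^sup>+x. (\<integral>\<^sup>+y. ennreal (w y * \<bar>k x y\<bar> * \<bar>u x\<bar>) \<partial>lborel) \<partial>lborel)"
    by (rule lborel_pair.Fubini') measurable
  also have "\<dots> = (\<integral>\<^sup>+x. ennreal \<bar>u x\<bar> * (\<integral>\<^sup>+y. ennreal (w y * \<bar>k x y\<bar>) \<partial>lborel) \<partial>lborel)"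
    using w by (intro nn_integral_cong, subst nn_integral_cmult[symmetric])
      (auto simp: ennreal_mult[symmetric] mult.commute mult.left_commute intro!: nn_integral_cong)
  finally show ?thesis .
qed


lemma transfer_op_L2:
  assumes k: "kmeas k" and [measurable]: "u \<in> borel_measurable lborel" and Dm[measurable]: "D \<in> sets borel"
    and supp: "\<And>x y. x \<notin> D \<Longrightarrow> k x y = 0"
  shows "(\<integral>\<^sup>+y. ennreal ((transfer_op k u y)\<^sup>2) \<partial>lborel)
     \<le> (\<integral>\<^sup>+z. ennreal ((k (fst z) (snd z))\<^sup>2) \<partial>(lborel \<Otimes>\<^sub>M lborel))
        * (\<integral>\<^sup>+x. ennreal ((indicator D x * u x)\<^sup>2) \<partial>lborel)"
proof -
  have [measurable]: "(\<lambda>z. k (fst z) (snd z)) \<in> borel_measurable (lborel \<Otimes>\<^sub>M lborel)"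
    using k unfolding kmeas_def .
  have [measurable]: "\<And>y. (\<lambda>x. k x y) \<in> borel_measurable borel" "\<And>x. (\<lambda>y. k x y) \<in> borel_measurable borel"
    using kmeas_sect1[OF k] kmeas_sect2[OF k] by auto
  have [measurable]: "(\<lambda>z. k (snd z) (fst z)) \<in> borel_measurable (lborel \<Otimes>\<^sub>M lborel)"
    using kmeas_swap[OF k] .
  have [measurable]: "(\<lambda>z. k (snd z) (fst z)) \<in> borel_measurable (borel \<Otimes>\<^sub>M borel)"
    using kmeas_swap[OF k] by (simp add: measurable_lborel2[symmetric] sets_pair_measure_cong)
  let ?Q = "(\<integral>\<^sup>+x. ennreal ((indicator D x * u x)\<^sup>2) \<partial>lborel)"
  have pt: "ennreal ((transfer_op k u y)\<^sup>2) \<le> (\<integral>\<^sup>+x. ennreal ((k x y)\<^sup>2) \<partial>lborel) * ?Q" for y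
  proof -
    have "ennreal ((transfer_op k u y)\<^sup>2) = (ennreal \<bar>transfer_op k u y\<bar>)\<^sup>2"
      by (simp add: ennreal_power)
    also have "\<dots> \<le> (\<integral>\<^sup>+x. ennreal \<bar>k x y * u x\<bar> \<partial>lborel)\<^sup>2"
      by (intro power_mono transfer_op_bound) auto
    also have "(\<integral>\<^sup>+x. ennreal \<bar>k x y * u x\<bar> \<partial>lborel)
        = (\<integral>\<^sup>+x. ennreal \<bar>k x y\<bar> * ennreal \<bar>indicator D x * u x\<bar> \<partial>lborel)"
      by (intro nn_integral_cong) (auto simp: supp ennreal_mult[symmetric] abs_mult indicator_def)
    also have "(\<dots>)\<^sup>2 \<le> (\<integral>\<^sup>+x. (ennreal \<bar>k x y\<bar>)^2 \<partial>lborel) * (\<integral>\<^sup>+x. (ennreal \<bar>indicator D x * u x\<bar>)^2 \<partial>lborel)"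
      by (rule Cauchy_Schwarz_nn_integral) auto
    also have "\<dots> = (\<integral>\<^sup>+x. ennreal ((k x y)\<^sup>2) \<partial>lborel) * ?Q"
      by (simp add: ennreal_power)
    finally show ?thesis .
  qed
  have "(\<integral>\<^sup>+y. ennreal ((transfer_op k u y)\<^sup>2) \<partial>lborel)
      \<le> (\<integral>\<^sup>+y. (\<integral>\<^sup>+x. ennreal ((k x y)\<^sup>2) \<partial>lborel) * ?Q \<partial>lborel)"
    by (intro nn_integral_mono pt)
  also have "\<dots> = (\<integral>\<^sup>+y. (\<integral>\<^sup>+x. ennreal ((k x y)\<^sup>2) \<partial>lborel) \<partial>lborel) * ?Q"
    by (rule nn_integral_multc) measurable
  also have "(\<integral>\<^sup>+y. (\<integral>\<^sup>+x. ennreal ((k x y)\<^sup>2) \<partial>lborel) \<partial>lborel)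
     = (\<integral>\<^sup>+x. (\<integral>\<^sup>+y. ennreal ((k x y)\<^sup>2) \<partial>lborel) \<partial>lborel)"
    by (rule lborel_pair.Fubini') measurable
  also have "\<dots> = (\<integral>\<^sup>+z. ennreal ((k (fst z) (snd z))\<^sup>2) \<partial>(lborel \<Otimes>\<^sub>M lborel))"
    by (subst lborel.nn_integral_fst[symmetric]) (auto)
  finally show ?thesis .
qed


lemma CS_real:
  fixes a b :: "'b \<Rightarrow> real"
  assumes [measurable]: "a \<in> borel_measurable M" "b \<in> borel_measurable M"
    and ia: "integrable M (\<lambda>x. (a x)\<^sup>2)" and ib: "integrable M (\<lambda>x. (b x)\<^sup>2)"
  shows "integrable M (\<lambda>x. a x * b x)"
    and "(\<integral>x. \<bar>a x * b x\<bar> \<partial>M)\<^sup>2 \<le> (\<integral>x. (a x)\<^sup>2 \<partial>M) * (\<integral>x. (b x)\<^sup>2 \<partial>M)"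
proof -
  have le: "\<bar>a x * b x\<bar> \<le> (a x)\<^sup>2 + (b x)\<^sup>2" for x
  proof -
    have "0 \<le> (\<bar>a x\<bar> - \<bar>b x\<bar>)\<^sup>2" by simp
    then have "2*\<bar>a x\<bar>*\<bar>b x\<bar> \<le> \<bar>a x\<bar>\<^sup>2 + \<bar>b x\<bar>\<^sup>2" by (simp add: power2_diff)
    moreover have "0 \<le> \<bar>a x\<bar>*\<bar>b x\<bar>" by simp
    ultimately show ?thesis unfolding abs_mult power2_abs by linarith
  qed
  show int: "integrable M (\<lambda>x. a x * b x)"
    by (rule Bochner_Integration.integrable_bound[OF Bochner_Integration.integrable_add[OF ia ib]]) (auto intro!: AE_I2 le)
  have "ennreal ((\<integral>x. \<bar>a x * b x\<bar> \<partial>M)\<^sup>2) = (ennreal (\<integral>x. \<bar>a x * b x\<bar> \<partial>M))\<^sup>2"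
    by (simp add: ennreal_power)
  also have "ennreal (\<integral>x. \<bar>a x * b x\<bar> \<partial>M) = (\<integral>\<^sup>+x. ennreal \<bar>a x\<bar> * ennreal \<bar>b x\<bar> \<partial>M)"
  proof -
    have "ennreal (\<integral>x. \<bar>a x * b x\<bar> \<partial>M) = (\<integral>\<^sup>+x. ennreal \<bar>a x * b x\<bar> \<partial>M)"
      using integrable_abs[OF int] by (subst nn_integral_eq_integral) auto
    also have "\<dots> = (\<integral>\<^sup>+x. ennreal \<bar>a x\<bar> * ennreal \<bar>b x\<bar> \<partial>M)"
      by (simp add: ennreal_mult abs_mult)
    finally show ?thesis .
  qed
  also have "(\<dots>)\<^sup>2 \<le> (\<integral>\<^sup>+x. (ennreal \<bar>a x\<bar>)^2 \<partial>M) * (\<integral>\<^sup>+x. (ennreal \<bar>b x\<bar>)^2 \<partial>M)"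
    by (rule Cauchy_Schwarz_nn_integral) auto
  also have "(\<integral>\<^sup>+x. (ennreal \<bar>a x\<bar>)^2 \<partial>M) = ennreal (\<integral>x. (a x)\<^sup>2 \<partial>M)"
    using ia by (subst nn_integral_eq_integral[symmetric]) (auto simp: ennreal_power)
  also have "(\<integral>\<^sup>+x. (ennreal \<bar>b x\<bar>)^2 \<partial>M) = ennreal (\<integral>x. (b x)\<^sup>2 \<partial>M)"
    using ib by (subst nn_integral_eq_integral[symmetric]) (auto simp: ennreal_power)
  finally show "(\<integral>x. \<bar>a x * b x\<bar> \<partial>M)\<^sup>2 \<le> (\<integral>x. (a x)\<^sup>2 \<partial>M) * (\<integral>x. (b x)\<^sup>2 \<partial>M)"
    using mult_nonneg_nonneg[OF integral_nonneg_AE[of "\<lambda>x. (a x)\<^sup>2" M] integral_nonneg_AE[of "\<lambda>x. (b x)\<^sup>2" M]]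
    by (simp add: ennreal_mult'[symmetric] ennreal_le_iff2) (auto)
qed

lemma Minkowski_L2:
  fixes a b :: "'b \<Rightarrow> real"
  assumes [measurable]: "a \<in> borel_measurable M" "b \<in> borel_measurable M"
    and ia: "integrable M (\<lambda>x. (a x)\<^sup>2)" and ib: "integrable M (\<lambda>x. (b x)\<^sup>2)"
  shows "integrable M (\<lambda>x. (a x + b x)\<^sup>2)"
    and "sqrt (\<integral>x. (a x + b x)\<^sup>2 \<partial>M) \<le> sqrt (\<integral>x. (a x)\<^sup>2 \<partial>M) + sqrt (\<integral>x. (b x)\<^sup>2 \<partial>M)"
proof -
  note cs = CS_real[OF assms]
  have iab: "integrable M (\<lambda>x. \<bar>a x * b x\<bar>)" using cs(1) by auto
  have eq: "(a x + b x)\<^sup>2 = (a x)\<^sup>2 + 2 * (a x * b x) + (b x)\<^sup>2" for x by (simp add: power2_eq_square algebra_simps)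
  show int: "integrable M (\<lambda>x. (a x + b x)\<^sup>2)"
    unfolding eq using ia ib cs(1) by auto
  let ?A = "\<integral>x. (a x)\<^sup>2 \<partial>M" and ?B = "\<integral>x. (b x)\<^sup>2 \<partial>M"
  have A0: "?A \<ge> 0" "?B \<ge> 0" by auto
  have "(\<integral>x. (a x + b x)\<^sup>2 \<partial>M) \<le> (\<integral>x. (a x)\<^sup>2 + 2 * \<bar>a x * b x\<bar> + (b x)\<^sup>2 \<partial>M)"
    using int ia ib iab by (intro integral_mono) (auto simp: eq)
  also have "\<dots> = ?A + 2 * (\<integral>x. \<bar>a x * b x\<bar> \<partial>M) + ?B"
    using ia ib iab by simp
  also have "(\<integral>x. \<bar>a x * b x\<bar> \<partial>M) \<le> sqrt ?A * sqrt ?B"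
  proof -
    have "(\<integral>x. \<bar>a x * b x\<bar> \<partial>M) \<le> sqrt ((\<integral>x. \<bar>a x * b x\<bar> \<partial>M)\<^sup>2)" by simp
    also have "\<dots> \<le> sqrt (?A * ?B)" using cs(2) by (rule real_sqrt_le_mono)
    finally show ?thesis by (simp add: real_sqrt_mult)
  qed
  finally have "(\<integral>x. (a x + b x)\<^sup>2 \<partial>M) \<le> (sqrt ?A + sqrt ?B)\<^sup>2"
    using A0 by (simp add: power2_eq_square algebra_simps)
  then have "sqrt (\<integral>x. (a x + b x)\<^sup>2 \<partial>M) \<le> sqrt ((sqrt ?A + sqrt ?B)\<^sup>2)" by (rule real_sqrt_le_mono)
  then show "sqrt (\<integral>x. (a x + b x)\<^sup>2 \<partial>M) \<le> sqrt ?A + sqrt ?B" using A0 by simp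
qed


definition Vf :: "'a::euclidean_space \<Rightarrow> real" where "Vf x = 1 + (norm x)\<^sup>2"

lemma Vf_ge1: "Vf x \<ge> 1" by (simp add: Vf_def)
lemma Vf_pos: "Vf x > 0" using Vf_ge1[of x] by linarith
lemma Vf_le: "c \<ge> 0 \<Longrightarrow> c \<le> Vf x * c"
  using mult_right_mono[OF Vf_ge1[of x], of c] by simp
lemma Vf_abs: "\<bar>c\<bar> \<le> Vf x * \<bar>c\<bar>" "0 \<le> Vf x * \<bar>c\<bar>" "\<bar>Vf x * \<bar>c\<bar>\<bar> = Vf x * \<bar>c\<bar>"
  using Vf_le[of "\<bar>c\<bar>" x] Vf_pos[of x] by auto
lemma Vf_nonneg: "0 \<le> Vf x" using Vf_pos[of x] by simp
lemma rho2: "rho 2 x = Vf x"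
proof -
  have "0 < 1 + (norm x)\<^sup>2" by (simp add: add_pos_nonneg)
  then show ?thesis by (simp add: rho_def Vf_def)
qed
lemma Vf_meas[measurable]: "Vf \<in> borel_measurable borel"
  unfolding Vf_def[abs_def] by measurable

lemma inB_meas: "in_B D u \<Longrightarrow> u \<in> borel_measurable borel"
  by (simp add: in_B_def)
lemma inB_intV: "in_B D u \<Longrightarrow> integrable lborel (\<lambda>x. Vf x * \<bar>u x\<bar>)"
proof -
  assume a: "in_B D u"
  then have "integrable lborel (\<lambda>x. \<bar>rho 2 x * u x\<bar>)" by (simp add: in_B_def)
  moreover have "\<bar>rho 2 x * u x\<bar> = Vf x * \<bar>u x\<bar>" for x
    using Vf_pos[of x] by (simp add: rho2 abs_mult)
  ultimately show ?thesis by simp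
qed
lemma inB_int: "in_B D u \<Longrightarrow> integrable lborel u"
proof -
  assume a: "in_B D u"
  show ?thesis
    by (rule Bochner_Integration.integrable_bound[OF inB_intV[OF a]])
       (use a in \<open>auto simp: in_B_def intro!: AE_I2, metis Vf_abs(1) Vf_abs(3)\<close>)
qed
lemma inB_intabs: "in_B D u \<Longrightarrow> integrable lborel (\<lambda>x. \<bar>u x\<bar>)"
  using inB_int by auto
lemma inB_L2: "in_B D u \<Longrightarrow> integrable lborel (\<lambda>x. (indicator D x * u x)\<^sup>2)"
  by (simp add: in_B_def)

lemma L1w_eq: "in_B D u \<Longrightarrow> L1w_norm 2 u = (\<integral>x. Vf x * \<bar>u x\<bar> \<partial>lborel)"
  by (simp add: L1w_norm_def rho2)

lemma nn_W: "in_B D u \<Longrightarrow> (\<integral>\<^sup>+x. ennreal (Vf x * \<bar>u x\<bar>) \<partial>lborel) = ennreal (L1w_norm 2 u)"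
  using Vf_abs by (subst nn_integral_eq_integral[OF inB_intV]) (auto simp: L1w_eq intro!: AE_I2)
lemma nn_L1: "in_B D u \<Longrightarrow> (\<integral>\<^sup>+x. ennreal \<bar>u x\<bar> \<partial>lborel) = ennreal (L1_norm u)"
  by (subst nn_integral_eq_integral[OF inB_intabs]) (auto simp: L1_norm_def)

lemma L1_le_W: "in_B D u \<Longrightarrow> L1_norm u \<le> L1w_norm 2 u"
  unfolding L1_norm_def L1w_eq
  by (intro integral_mono inB_intabs inB_intV) (use Vf_abs in auto)
lemma L1_nonneg: "L1_norm u \<ge> 0" by (simp add: L1_norm_def)
lemma W_nonneg: "L1w_norm 2 u \<ge> 0"
  unfolding L1w_norm_def by (intro integral_nonneg_AE AE_I2) (simp add: rho_def)
lemma L2_nonneg: "L2_norm u \<ge> 0" by (simp add: L2_norm_def)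


locale kern =
  fixes \<kappa> :: "'a::euclidean_space \<Rightarrow> 'a \<Rightarrow> real" and D :: "'a set" and C0 \<gamma> Cd :: real
  assumes km: "kmeas \<kappa>"
   and kpos: "\<And>x y. 0 \<le> \<kappa> x y" and kbd: "\<And>x y. \<kappa> x y \<le> C0"
   and kmass: "\<And>x. (\<integral>\<^sup>+y. ennreal (\<kappa> x y) \<partial>lborel) = 1"
   and drift: "\<And>x. (\<integral>\<^sup>+y. ennreal (Vf y * \<kappa> x y) \<partial>lborel) \<le> ennreal (\<gamma> * Vf x + Cd)"
   and gam: "0 \<le> \<gamma>" "\<gamma> < 1" and Cd: "0 \<le> Cd"
   and minor: "\<And>R. \<exists>\<eta>>0. \<forall>x y. Vf x \<le> R \<longrightarrow> y \<in> D \<longrightarrow> \<eta> \<le> \<kappa> x y"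
   and Dc: "compact D" and Dpos: "0 < measure lborel D"
begin

lemma C0_nonneg: "0 \<le> C0" using kpos kbd order_trans by blast
lemma D_sets[measurable]: "D \<in> sets borel" using Dc by (simp add: borel_compact)
lemma D_fin: "emeasure lborel D < \<infinity>" using Dc by (rule emeasure_compact_finite)
lemma D_meas_eq: "emeasure lborel D = ennreal (measure lborel D)"
  using D_fin by (simp add: emeasure_eq_ennreal_measure)
lemma int_indD: "integrable lborel (indicator D :: 'a \<Rightarrow> real)"
  using D_fin by (intro integrable_real_indicator) auto

lemma km_sect[measurable]: "(\<lambda>x. \<kappa> x y) \<in> borel_measurable borel" "(\<lambda>y. \<kappa> x y) \<in> borel_measurable borel"
  using kmeas_sect1[OF km] kmeas_sect2[OF km] by auto

lemma int_k: assumes "in_B D u" shows "integrable lborel (\<lambda>x. \<kappa> x y * u x)"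
proof -
  have [measurable]: "u \<in> borel_measurable borel" using inB_meas[OF assms] .
  show ?thesis
    by (rule Bochner_Integration.integrable_bound[OF integrable_mult_right[OF inB_intabs[OF assms], of C0]])
       (auto simp: abs_mult kpos abs_of_nonneg[OF C0_nonneg] intro!: AE_I2 mult_right_mono kbd)
qed

lemma Lop_bound: assumes "in_B D u" shows "\<bar>transfer_op \<kappa> u y\<bar> \<le> C0 * L1_norm u"
proof -
  have "\<bar>transfer_op \<kappa> u y\<bar> \<le> (\<integral>x. \<bar>\<kappa> x y * u x\<bar> \<partial>lborel)"
    unfolding transfer_op_def by (rule integral_abs_bound)
  also have "\<dots> \<le> (\<integral>x. C0 * \<bar>u x\<bar> \<partial>lborel)"
    using integrable_abs[OF int_k[OF assms]] inB_intabs[OF assms]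
    by (intro integral_mono) (auto simp: abs_mult kpos intro!: mult_right_mono kbd)
  also have "\<dots> = C0 * L1_norm u" by (simp add: L1_norm_def)
  finally show ?thesis .
qed

lemma Lop_drift_nn: assumes "in_B D u"
  shows "(\<integral>\<^sup>+y. ennreal (Vf y * \<bar>transfer_op \<kappa> u y\<bar>) \<partial>lborel)
     \<le> ennreal (\<gamma> * L1w_norm 2 u + Cd * L1_norm u)"
proof -
  have [measurable]: "u \<in> borel_measurable borel" using inB_meas[OF assms] .
  have "(\<integral>\<^sup>+y. ennreal (Vf y * \<bar>transfer_op \<kappa> u y\<bar>) \<partial>lborel)
     \<le> (\<integral>\<^sup>+x. ennreal \<bar>u x\<bar> * (\<integral>\<^sup>+y. ennreal (Vf y * \<bar>\<kappa> x y\<bar>) \<partial>lborel) \<partial>lborel)"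
    by (rule transfer_op_tonelli[OF km]) (auto intro: less_imp_le Vf_pos)
  also have "\<dots> \<le> (\<integral>\<^sup>+x. ennreal (\<gamma> * (Vf x * \<bar>u x\<bar>) + Cd * \<bar>u x\<bar>) \<partial>lborel)"
  proof (intro nn_integral_mono)
    fix x
    have "ennreal \<bar>u x\<bar> * (\<integral>\<^sup>+y. ennreal (Vf y * \<bar>\<kappa> x y\<bar>) \<partial>lborel) \<le> ennreal \<bar>u x\<bar> * ennreal (\<gamma> * Vf x + Cd)"
      using drift[of x] by (intro mult_left_mono) (auto simp: kpos)
    also have "\<dots> = ennreal (\<gamma> * (Vf x * \<bar>u x\<bar>) + Cd * \<bar>u x\<bar>)"
      using gam Cd Vf_pos[of x] by (subst ennreal_mult[symmetric]) (auto simp: algebra_simps)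
    finally show "ennreal \<bar>u x\<bar> * (\<integral>\<^sup>+y. ennreal (Vf y * \<bar>\<kappa> x y\<bar>) \<partial>lborel) \<le> \<dots>" .
  qed
  also have "\<dots> = ennreal (\<integral>x. \<gamma> * (Vf x * \<bar>u x\<bar>) + Cd * \<bar>u x\<bar> \<partial>lborel)"
    using inB_intV[OF assms] inB_intabs[OF assms] gam Cd Vf_abs Vf_nonneg
    by (intro nn_integral_eq_integral) (auto intro!: AE_I2 add_nonneg_nonneg mult_nonneg_nonneg)
  also have "(\<integral>x. \<gamma> * (Vf x * \<bar>u x\<bar>) + Cd * \<bar>u x\<bar> \<partial>lborel) = \<gamma> * L1w_norm 2 u + Cd * L1_norm u"
    using inB_intV[OF assms] inB_intabs[OF assms] by (simp add: L1w_eq[OF assms] L1_norm_def)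
  finally show ?thesis .
qed

lemma Lop_inB: assumes "in_B D u" shows "in_B D (transfer_op \<kappa> u)"
proof -
  have [measurable]: "u \<in> borel_measurable borel" using inB_meas[OF assms] .
  have m[measurable]: "transfer_op \<kappa> u \<in> borel_measurable borel"
    using transfer_op_meas[OF km, of u] by simp
  have "integrable lborel (\<lambda>y. Vf y * \<bar>transfer_op \<kappa> u y\<bar>)"
  proof (rule integrableI_bounded)
    show "(\<integral>\<^sup>+y. ennreal (norm (Vf y * \<bar>transfer_op \<kappa> u y\<bar>)) \<partial>lborel) < \<infinity>"
      using Lop_drift_nn[OF assms] by (simp add: Vf_abs(3) order_le_less_trans)
  qed simp
  then have i1: "integrable lborel (\<lambda>y. rho 2 y * transfer_op \<kappa> u y)"
    by (subst integrable_abs_iff[symmetric]) (auto simp: rho2 abs_mult Vf_abs(3) Vf_pos less_imp_le)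
  have i2: "integrable lborel (\<lambda>y. (indicator D y * transfer_op \<kappa> u y)\<^sup>2)"
    by (rule Bochner_Integration.integrable_bound[OF integrable_mult_right[OF int_indD, of "(C0 * L1_norm u)\<^sup>2"]])
      (auto intro!: AE_I2 simp: indicator_def power_mono abs_le_square_iff[symmetric] abs_of_nonneg[OF mult_nonneg_nonneg[OF C0_nonneg L1_nonneg]] Lop_bound[OF assms])
  show ?thesis using i1 i2 by (simp add: in_B_def)
qed

lemma Lop_W: assumes "in_B D u"
  shows "L1w_norm 2 (transfer_op \<kappa> u) \<le> \<gamma> * L1w_norm 2 u + Cd * L1_norm u"
proof -
  have "ennreal (L1w_norm 2 (transfer_op \<kappa> u)) \<le> ennreal (\<gamma> * L1w_norm 2 u + Cd * L1_norm u)"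
    using Lop_drift_nn[OF assms] nn_W[OF Lop_inB[OF assms]] by simp
  moreover have "0 \<le> \<gamma> * L1w_norm 2 u + Cd * L1_norm u"
    using gam Cd W_nonneg L1_nonneg by (intro add_nonneg_nonneg mult_nonneg_nonneg) auto
  ultimately show ?thesis by (simp add: ennreal_le_iff)
qed

lemma Lop_Q: assumes "in_B D u"
  shows "L2_norm (\<lambda>y. indicator D y * transfer_op \<kappa> u y) \<le> C0 * sqrt (measure lborel D) * L1_norm u"
proof -
  have "(\<integral>y. (indicator D y * transfer_op \<kappa> u y)\<^sup>2 \<partial>lborel) \<le> (\<integral>y. indicator D y * (C0 * L1_norm u)\<^sup>2 \<partial>lborel)"
    using inB_L2[OF Lop_inB[OF assms]] integrable_mult_left[OF int_indD, of "(C0 * L1_norm u)\<^sup>2"]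
    by (intro integral_mono)
      (auto simp: indicator_def power_mono abs_le_square_iff[symmetric] abs_of_nonneg[OF mult_nonneg_nonneg[OF C0_nonneg L1_nonneg]] Lop_bound[OF assms])
  also have "\<dots> = measure lborel D * (C0 * L1_norm u)\<^sup>2" by simp
  finally have "sqrt (\<integral>y. (indicator D y * transfer_op \<kappa> u y)\<^sup>2 \<partial>lborel) \<le> sqrt (measure lborel D * (C0 * L1_norm u)\<^sup>2)"
    by (rule real_sqrt_le_mono)
  also have "\<dots> = C0 * sqrt (measure lborel D) * L1_norm u"
    using C0_nonneg L1_nonneg[of u] by (simp add: real_sqrt_mult abs_of_nonneg)
  finally show ?thesis by (simp add: L2_norm_def)
qed

end

context kern begin

lemma harris:
  assumes R: "R > 0"
  shows "\<exists>\<eta>'>0. \<forall>g. in_B D g \<and> (\<integral>x. g x \<partial>lborel) = 0 \<longrightarrow>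
     L1_norm (transfer_op \<kappa> g) \<le> (1 - \<eta>') * L1_norm g + 2 * \<eta>' / R * L1w_norm 2 g"
proof -
  obtain \<eta> where eta: "\<eta> > 0" "\<And>x y. Vf x \<le> R \<Longrightarrow> y \<in> D \<Longrightarrow> \<eta> \<le> \<kappa> x y"
    using minor[of R] by blast
  define S where "S = {x::'a. Vf x \<le> R}"
  have S_meas[measurable]: "S \<in> sets borel" unfolding S_def by measurable
  define e where "e = \<eta> * measure lborel D"
  have e0: "e > 0" using eta Dpos by (simp add: e_def)
  define kt where "kt x y = \<kappa> x y - \<eta> * indicator S x * indicator D y" for x y
  have kt_nonneg: "0 \<le> kt x y" for x y
    using eta(2)[of x y] kpos[of x y] by (auto simp: kt_def S_def indicator_def)
  have kt_le: "kt x y \<le> C0" for x y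
    using eta(1) kbd[of x y] by (auto simp: kt_def indicator_def)
  have [measurable]: "(\<lambda>z. \<kappa> (fst z) (snd z)) \<in> borel_measurable (lborel \<Otimes>\<^sub>M lborel)"
    using km unfolding kmeas_def .
  have [measurable]: "(\<lambda>z. \<kappa> (snd z) (fst z)) \<in> borel_measurable (lborel \<Otimes>\<^sub>M lborel)"
    using kmeas_swap[OF km] .
  have [measurable]: "(\<lambda>z. \<kappa> (snd z) (fst z)) \<in> borel_measurable (borel \<Otimes>\<^sub>M borel)"
    using kmeas_swap[OF km] by (simp add: measurable_lborel2[symmetric] sets_pair_measure_cong)
  have [measurable]: "(\<lambda>z. \<kappa> (fst z) (snd z)) \<in> borel_measurable (borel \<Otimes>\<^sub>M borel)"
    using km unfolding kmeas_def by (simp add: measurable_lborel2[symmetric] sets_pair_measure_cong)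
  have kt_meas[measurable]: "(\<lambda>x. kt x y) \<in> borel_measurable borel" "(\<lambda>y. kt x y) \<in> borel_measurable borel" for x y
    unfolding kt_def by measurable
  have kt_mass: "(\<integral>\<^sup>+y. ennreal (kt x y) \<partial>lborel) = ennreal (1 - e * indicator S x)"
    and e_le: "e * indicator S x \<le> 1" for x
  proof -
    have "1 = (\<integral>\<^sup>+y. ennreal (\<kappa> x y) \<partial>lborel)" using kmass[of x] by simp
    also have "\<dots> = (\<integral>\<^sup>+y. ennreal (\<eta> * indicator S x) * indicator D y + ennreal (kt x y) \<partial>lborel)"
    proof (intro nn_integral_cong)
      fix y
      have "ennreal (\<kappa> x y) = ennreal (\<eta> * indicator S x * indicator D y + kt x y)" by (simp add: kt_def)
      also have "\<dots> = ennreal (\<eta> * indicator S x * indicator D y) + ennreal (kt x y)"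
        using eta(1) kt_nonneg by (intro ennreal_plus) auto
      also have "ennreal (\<eta> * indicator S x * indicator D y) = ennreal (\<eta> * indicator S x) * indicator D y"
        by (auto simp: indicator_def)
      finally show "ennreal (\<kappa> x y) = ennreal (\<eta> * indicator S x) * indicator D y + ennreal (kt x y)" .
    qed
    also have "\<dots> = ennreal (\<eta> * indicator S x) * emeasure lborel D + (\<integral>\<^sup>+y. ennreal (kt x y) \<partial>lborel)"
      by (subst nn_integral_add) (auto simp: nn_integral_cmult)
    also have "ennreal (\<eta> * indicator S x) * emeasure lborel D = ennreal (e * indicator S x)"
      using eta(1) by (simp add: D_meas_eq e_def ennreal_mult[symmetric] mult_ac)
    finally have eq: "1 = ennreal (e * indicator S x) + (\<integral>\<^sup>+y. ennreal (kt x y) \<partial>lborel)" .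
    have "ennreal (e * indicator S x) \<le> ennreal (e * indicator S x) + (\<integral>\<^sup>+y. ennreal (kt x y) \<partial>lborel)"
      by (rule add_increasing2) auto
    then have "ennreal (e * indicator S x) \<le> 1" using eq by simp
    then show le: "e * indicator S x \<le> 1" by (simp add: ennreal_le_1)
    from eq have "(\<integral>\<^sup>+y. ennreal (kt x y) \<partial>lborel) = 1 - ennreal (e * indicator S x)"
      using ennreal_add_diff_cancel_left[of "ennreal (e * indicator S x)" "\<integral>\<^sup>+y. ennreal (kt x y) \<partial>lborel"] by simp
    also have "\<dots> = ennreal (1 - e * indicator S x)"
      using e0 by (subst ennreal_1[symmetric], subst ennreal_minus) auto
    finally show "(\<integral>\<^sup>+y. ennreal (kt x y) \<partial>lborel) = ennreal (1 - e * indicator S x)" .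
  qed
  show ?thesis
  proof (intro exI[of _ e] conjI allI impI e0)
    fix g assume g: "in_B D g \<and> (\<integral>x. g x \<partial>lborel) = 0"
    have gB: "in_B D g" and g0: "(\<integral>x. g x \<partial>lborel) = 0" using g by auto
    have [measurable]: "g \<in> borel_measurable borel" using inB_meas[OF gB] .
    have ig: "integrable lborel g" using inB_int[OF gB] .
    have iga: "integrable lborel (\<lambda>x. \<bar>g x\<bar>)" using inB_intabs[OF gB] .
    have iSg: "integrable lborel (\<lambda>x. indicator S x * g x)"
      by (rule Bochner_Integration.integrable_bound[OF iga]) (auto simp: indicator_def intro!: AE_I2)
    have iktg: "integrable lborel (\<lambda>x. kt x y * g x)" for y
      by (rule Bochner_Integration.integrable_bound[OF integrable_mult_right[OF iga, of C0]])
        (auto simp: abs_mult abs_of_nonneg[OF kt_nonneg] abs_of_nonneg[OF C0_nonneg] intro!: AE_I2 mult_right_mono kt_le)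
    have iktga: "integrable lborel (\<lambda>x. kt x y * \<bar>g x\<bar>)" for y
      using integrable_abs[OF iktg[of y]] by (simp add: abs_mult abs_of_nonneg[OF kt_nonneg])
    define IS where "IS = (\<integral>x. indicator S x * g x \<partial>lborel)"
    have pt: "\<bar>transfer_op \<kappa> g y\<bar> \<le> \<eta> * indicator D y * \<bar>IS\<bar> + (\<integral>x. kt x y * \<bar>g x\<bar> \<partial>lborel)" for y
    proof -
      have "transfer_op \<kappa> g y = (\<integral>x. (\<eta> * indicator D y) * (indicator S x * g x) + kt x y * g x \<partial>lborel)"
        unfolding transfer_op_def by (intro Bochner_Integration.integral_cong) (auto simp: kt_def algebra_simps)
      also have "\<dots> = \<eta> * indicator D y * IS + (\<integral>x. kt x y * g x \<partial>lborel)"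
        using iSg iktg[of y] by (simp add: IS_def)
      finally have "\<bar>transfer_op \<kappa> g y\<bar> \<le> \<bar>\<eta> * indicator D y * IS\<bar> + \<bar>\<integral>x. kt x y * g x \<partial>lborel\<bar>"
        by simp
      also have "\<bar>\<integral>x. kt x y * g x \<partial>lborel\<bar> \<le> (\<integral>x. kt x y * \<bar>g x\<bar> \<partial>lborel)"
        using integral_abs_bound[of lborel "\<lambda>x. kt x y * g x"] by (simp add: abs_mult abs_of_nonneg[OF kt_nonneg])
      also have "\<bar>\<eta> * indicator D y * IS\<bar> = \<eta> * indicator D y * \<bar>IS\<bar>"
        using eta(1) by (simp add: abs_mult)
      finally show ?thesis by simp
    qed
    have "ennreal (L1_norm (transfer_op \<kappa> g)) = (\<integral>\<^sup>+y. ennreal \<bar>transfer_op \<kappa> g y\<bar> \<partial>lborel)"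
      using nn_L1[OF Lop_inB[OF gB]] by simp
    also have "\<dots> \<le> (\<integral>\<^sup>+y. ennreal (\<eta> * \<bar>IS\<bar>) * indicator D y + (\<integral>\<^sup>+x. ennreal (kt x y * \<bar>g x\<bar>) \<partial>lborel) \<partial>lborel)"
    proof (intro nn_integral_mono)
      fix y
      have "ennreal \<bar>transfer_op \<kappa> g y\<bar> \<le> ennreal (\<eta> * indicator D y * \<bar>IS\<bar> + (\<integral>x. kt x y * \<bar>g x\<bar> \<partial>lborel))"
        using pt[of y] by (rule ennreal_leI)
      also have "\<dots> = ennreal (\<eta> * indicator D y * \<bar>IS\<bar>) + ennreal (\<integral>x. kt x y * \<bar>g x\<bar> \<partial>lborel)"
        using eta(1) iktga[of y] kt_nonneg
        by (intro ennreal_plus) (auto intro!: integral_nonneg_AE AE_I2)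
      also have "ennreal (\<integral>x. kt x y * \<bar>g x\<bar> \<partial>lborel) = (\<integral>\<^sup>+x. ennreal (kt x y * \<bar>g x\<bar>) \<partial>lborel)"
        using iktga[of y] kt_nonneg by (subst nn_integral_eq_integral) (auto intro!: AE_I2)
      also have "ennreal (\<eta> * indicator D y * \<bar>IS\<bar>) = ennreal (\<eta> * \<bar>IS\<bar>) * indicator D y"
        by (auto simp: indicator_def)
      finally show "ennreal \<bar>transfer_op \<kappa> g y\<bar> \<le> ennreal (\<eta> * \<bar>IS\<bar>) * indicator D y + (\<integral>\<^sup>+x. ennreal (kt x y * \<bar>g x\<bar>) \<partial>lborel)" .
    qed
    also have "\<dots> = ennreal (\<eta> * \<bar>IS\<bar>) * emeasure lborel D + (\<integral>\<^sup>+y. (\<integral>\<^sup>+x. ennreal (kt x y * \<bar>g x\<bar>) \<partial>lborel) \<partial>lborel)"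
      by (subst nn_integral_add) (auto simp: nn_integral_cmult kt_def)
    also have "(\<integral>\<^sup>+y. (\<integral>\<^sup>+x. ennreal (kt x y * \<bar>g x\<bar>) \<partial>lborel) \<partial>lborel)
        = (\<integral>\<^sup>+x. (\<integral>\<^sup>+y. ennreal (kt x y * \<bar>g x\<bar>) \<partial>lborel) \<partial>lborel)"
      by (rule lborel_pair.Fubini') (simp add: kt_def)
    also have "\<dots> = (\<integral>\<^sup>+x. ennreal \<bar>g x\<bar> * ennreal (1 - e * indicator S x) \<partial>lborel)"
    proof (intro nn_integral_cong)
      fix x
      have "(\<integral>\<^sup>+y. ennreal (kt x y * \<bar>g x\<bar>) \<partial>lborel) = (\<integral>\<^sup>+y. ennreal \<bar>g x\<bar> * ennreal (kt x y) \<partial>lborel)"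
        using kt_nonneg by (intro nn_integral_cong) (simp add: ennreal_mult mult.commute)
      also have "\<dots> = ennreal \<bar>g x\<bar> * ennreal (1 - e * indicator S x)"
        by (subst nn_integral_cmult) (auto simp: kt_mass)
      finally show "(\<integral>\<^sup>+y. ennreal (kt x y * \<bar>g x\<bar>) \<partial>lborel) = ennreal \<bar>g x\<bar> * ennreal (1 - e * indicator S x)" .
    qed
    also have "\<dots> = ennreal (\<integral>x. \<bar>g x\<bar> * (1 - e * indicator S x) \<partial>lborel)"
    proof -
      have ii: "integrable lborel (\<lambda>x. \<bar>g x\<bar> * (1 - e * indicator S x))"
        by (rule Bochner_Integration.integrable_bound[OF iga])
          (use e0 e_le in \<open>auto simp: indicator_def abs_mult intro!: AE_I2 mult_left_le\<close>)
      have "(\<integral>\<^sup>+x. ennreal \<bar>g x\<bar> * ennreal (1 - e * indicator S x) \<partial>lborel)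
          = (\<integral>\<^sup>+x. ennreal (\<bar>g x\<bar> * (1 - e * indicator S x)) \<partial>lborel)"
        using e_le by (intro nn_integral_cong) (simp add: ennreal_mult)
      also have "\<dots> = ennreal (\<integral>x. \<bar>g x\<bar> * (1 - e * indicator S x) \<partial>lborel)"
        using ii e_le by (intro nn_integral_eq_integral) (auto intro!: AE_I2 mult_nonneg_nonneg)
      finally show ?thesis .
    qed
    also have "ennreal (\<eta> * \<bar>IS\<bar>) * emeasure lborel D = ennreal (e * \<bar>IS\<bar>)"
      using eta(1) by (simp add: D_meas_eq e_def ennreal_mult[symmetric] mult_ac)
    finally have main0: "ennreal (L1_norm (transfer_op \<kappa> g)) \<le> ennreal (e * \<bar>IS\<bar>) + ennreal (\<integral>x. \<bar>g x\<bar> * (1 - e * indicator S x) \<partial>lborel)" .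
    have nn2: "0 \<le> (\<integral>x. \<bar>g x\<bar> * (1 - e * indicator S x) \<partial>lborel)"
      using e_le by (intro integral_nonneg_AE AE_I2 mult_nonneg_nonneg) auto
    have main: "L1_norm (transfer_op \<kappa> g) \<le> e * \<bar>IS\<bar> + (\<integral>x. \<bar>g x\<bar> * (1 - e * indicator S x) \<partial>lborel)"
      using main0 nn2 e0 by (simp add: ennreal_plus[symmetric] ennreal_le_iff del: ennreal_plus)
    have iSga: "integrable lborel (\<lambda>x. indicator S x * \<bar>g x\<bar>)"
      by (rule Bochner_Integration.integrable_bound[OF iga]) (auto simp: indicator_def intro!: AE_I2)
    define A where "A = (\<integral>x. \<bar>g x\<bar> \<partial>lborel)"
    define IA where "IA = (\<integral>x. indicator S x * \<bar>g x\<bar> \<partial>lborel)"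
    have A_eq: "A = L1_norm g" by (simp add: A_def L1_norm_def)
    have eq1: "(\<integral>x. \<bar>g x\<bar> * (1 - e * indicator S x) \<partial>lborel) = A - e * IA"
    proof -
      have "(\<integral>x. \<bar>g x\<bar> * (1 - e * indicator S x) \<partial>lborel) = (\<integral>x. \<bar>g x\<bar> - e * (indicator S x * \<bar>g x\<bar>) \<partial>lborel)"
        by (intro Bochner_Integration.integral_cong) (auto simp: algebra_simps)
      also have "\<dots> = A - e * IA" using iga iSga by (simp add: A_def IA_def)
      finally show ?thesis .
    qed
    have IS_le: "\<bar>IS\<bar> \<le> A - IA"
    proof -
      have "IS = IS - (\<integral>x. g x \<partial>lborel)" using g0 by simp
      also have "\<dots> = (\<integral>x. indicator S x * g x - g x \<partial>lborel)" using iSg ig by (simp add: IS_def)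
      finally have "\<bar>IS\<bar> \<le> (\<integral>x. \<bar>indicator S x * g x - g x\<bar> \<partial>lborel)"
        using integral_abs_bound by (metis)
      also have "\<dots> = (\<integral>x. \<bar>g x\<bar> - indicator S x * \<bar>g x\<bar> \<partial>lborel)"
        by (intro Bochner_Integration.integral_cong) (auto simp: indicator_def)
      also have "\<dots> = A - IA" using iga iSga by (simp add: A_def IA_def)
      finally show ?thesis .
    qed
    have E_le: "A - IA \<le> L1w_norm 2 g / R"
    proof -
      have "A - IA = (\<integral>x. \<bar>g x\<bar> - indicator S x * \<bar>g x\<bar> \<partial>lborel)" using iga iSga by (simp add: A_def IA_def)
      also have "\<dots> \<le> (\<integral>x. Vf x * \<bar>g x\<bar> / R \<partial>lborel)"
      proof (intro integral_mono)
        show "integrable lborel (\<lambda>x. \<bar>g x\<bar> - indicator S x * \<bar>g x\<bar>)" using iga iSga by simp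
        show "integrable lborel (\<lambda>x. Vf x * \<bar>g x\<bar> / R)" using inB_intV[OF gB] by simp
        fix x
        show "\<bar>g x\<bar> - indicator S x * \<bar>g x\<bar> \<le> Vf x * \<bar>g x\<bar> / R"
        proof (cases "x \<in> S")
          case True then show ?thesis using R Vf_abs(2)[of x "g x"] by simp
        next
          case False
          then have "R \<le> Vf x" by (simp add: S_def)
          then have "R * \<bar>g x\<bar> \<le> Vf x * \<bar>g x\<bar>" by (intro mult_right_mono) auto
          then show ?thesis using False R by (simp add: field_simps)
        qed
      qed
      also have "\<dots> = L1w_norm 2 g / R" by (simp add: L1w_eq[OF gB])
      finally show ?thesis .
    qed
    have "L1_norm (transfer_op \<kappa> g) \<le> e * (A - IA) + (A - e * IA)"
    proof -
      have "e * \<bar>IS\<bar> \<le> e * (A - IA)" using IS_le e0 by (intro mult_left_mono) auto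
      then show ?thesis using main eq1 by linarith
    qed
    also have "\<dots> = (1 - e) * A + 2 * e * (A - IA)" by (simp add: algebra_simps)
    also have "\<dots> \<le> (1 - e) * A + 2 * e * (L1w_norm 2 g / R)"
      using mult_left_mono[OF E_le, of "2*e"] e0 by simp
    finally show "L1_norm (transfer_op \<kappa> g) \<le> (1 - e) * L1_norm g + 2 * e / R * L1w_norm 2 g"
      by (simp add: A_eq)
  qed
qed

end

lemma inB_AE:
  assumes Dm[measurable]: "D \<in> sets borel" and f: "in_B D f" and [measurable]: "h \<in> borel_measurable borel" and ae: "AE x in lborel. h x = f x"
  shows "in_B D h" "L1_norm h = L1_norm f" "L1w_norm 2 h = L1w_norm 2 f"
    "L2_norm (\<lambda>x. indicator D x * h x) = L2_norm (\<lambda>x. indicator D x * f x)"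
    "integral\<^sup>L lborel h = integral\<^sup>L lborel f"
proof -
  have ae1: "AE x in lborel. rho 2 x * h x = rho 2 x * f x" using ae by eventually_elim simp
  have ae2: "AE x in lborel. (indicator D x * h x)\<^sup>2 = (indicator D x * f x)\<^sup>2" using ae by eventually_elim simp
  have fm[measurable]: "f \<in> borel_measurable borel" using f by (simp add: in_B_def)
  have [measurable]: "rho 2 \<in> borel_measurable borel" unfolding rho_def[abs_def] by measurable
  have "integrable lborel (\<lambda>x. rho 2 x * h x)"
    using f ae1 by (subst integrable_cong_AE[OF _ _ ae1]) (auto simp: in_B_def)
  moreover have "integrable lborel (\<lambda>x. (indicator D x * h x)\<^sup>2)"
    using f by (subst integrable_cong_AE[OF _ _ ae2]) (auto simp: in_B_def)
  ultimately show "in_B D h" by (simp add: in_B_def)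
  show "L1_norm h = L1_norm f" unfolding L1_norm_def
    by (intro integral_cong_AE) (use ae in \<open>auto elim!: AE_mp\<close>)
  show "L1w_norm 2 h = L1w_norm 2 f" unfolding L1w_norm_def
    by (intro integral_cong_AE) (use ae in \<open>auto elim!: AE_mp\<close>)
  show "L2_norm (\<lambda>x. indicator D x * h x) = L2_norm (\<lambda>x. indicator D x * f x)" unfolding L2_norm_def
    using ae2 by (subst integral_cong_AE[OF _ _ ae2]) (auto simp: in_B_def)
  show "integral\<^sup>L lborel h = integral\<^sup>L lborel f"
    by (intro integral_cong_AE) (use ae in auto)
qed

lemma inB_add:
  assumes Dm[measurable]: "D \<in> sets borel" and f: "in_B D f" and g: "in_B D g"
  shows "in_B D (\<lambda>x. f x + c * g x)"
    "L1_norm (\<lambda>x. f x + c * g x) \<le> L1_norm f + \<bar>c\<bar> * L1_norm g"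
    "L1w_norm 2 (\<lambda>x. f x + c * g x) \<le> L1w_norm 2 f + \<bar>c\<bar> * L1w_norm 2 g"
    "L2_norm (\<lambda>x. indicator D x * (f x + c * g x)) \<le> L2_norm (\<lambda>x. indicator D x * f x) + \<bar>c\<bar> * L2_norm (\<lambda>x. indicator D x * g x)"
    "integral\<^sup>L lborel (\<lambda>x. f x + c * g x) = integral\<^sup>L lborel f + c * integral\<^sup>L lborel g"
proof -
  have [measurable]: "f \<in> borel_measurable borel" "g \<in> borel_measurable borel" using f g by (auto simp: in_B_def)
  have [measurable]: "rho 2 \<in> borel_measurable borel" unfolding rho_def[abs_def] by measurable
  have i1: "integrable lborel (\<lambda>x. rho 2 x * f x)" "integrable lborel (\<lambda>x. rho 2 x * g x)" using f g by (auto simp: in_B_def)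
  have i2: "integrable lborel (\<lambda>x. (indicator D x * f x)\<^sup>2)" using f by (auto simp: in_B_def)
  have i3: "integrable lborel (\<lambda>x. (c * (indicator D x * g x))\<^sup>2)"
    using integrable_mult_right[OF inB_L2[OF g], of "c\<^sup>2"] by (auto simp: power_mult_distrib)
  note mk = Minkowski_L2[where a="\<lambda>x. indicator D x * f x" and M=lborel and b="\<lambda>x. c * (indicator D x * g x)", OF _ _ i2 i3, simplified]
  have "integrable lborel (\<lambda>x. rho 2 x * (f x + c * g x))"
    using i1 by (simp add: algebra_simps)
  moreover have "integrable lborel (\<lambda>x. (indicator D x * (f x + c * g x))\<^sup>2)"
    using mk(1) by (simp add: algebra_simps)
  ultimately show sB: "in_B D (\<lambda>x. f x + c * g x)" by (simp add: in_B_def)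
  have ia: "integrable lborel (\<lambda>x. \<bar>f x\<bar>)" "integrable lborel (\<lambda>x. \<bar>g x\<bar>)"
    using inB_intabs[OF f] inB_intabs[OF g] .
  have ib: "integrable lborel f" "integrable lborel g" using inB_int[OF f] inB_int[OF g] .
  show "L1_norm (\<lambda>x. f x + c * g x) \<le> L1_norm f + \<bar>c\<bar> * L1_norm g"
  proof -
    have "L1_norm (\<lambda>x. f x + c * g x) \<le> (\<integral>x. \<bar>f x\<bar> + \<bar>c\<bar> * \<bar>g x\<bar> \<partial>lborel)"
      unfolding L1_norm_def using ia ib by (intro integral_mono) (auto simp: abs_mult[symmetric] abs_triangle_ineq)
    then show ?thesis using ia by (simp add: L1_norm_def)
  qed
  have iv: "integrable lborel (\<lambda>x. Vf x * \<bar>f x\<bar>)" "integrable lborel (\<lambda>x. Vf x * \<bar>g x\<bar>)"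
    using inB_intV[OF f] inB_intV[OF g] .
  show "L1w_norm 2 (\<lambda>x. f x + c * g x) \<le> L1w_norm 2 f + \<bar>c\<bar> * L1w_norm 2 g"
  proof -
    have "L1w_norm 2 (\<lambda>x. f x + c * g x) \<le> (\<integral>x. Vf x * \<bar>f x\<bar> + \<bar>c\<bar> * (Vf x * \<bar>g x\<bar>) \<partial>lborel)"
      unfolding L1w_norm_def rho2 using iv
    proof (intro integral_mono)
      fix x
      have "Vf x * \<bar>f x + c * g x\<bar> \<le> Vf x * (\<bar>f x\<bar> + \<bar>c\<bar> * \<bar>g x\<bar>)"
        using Vf_nonneg[of x] by (intro mult_left_mono) (auto simp: abs_mult[symmetric] abs_triangle_ineq)
      then show "Vf x * \<bar>f x + c * g x\<bar> \<le> Vf x * \<bar>f x\<bar> + \<bar>c\<bar> * (Vf x * \<bar>g x\<bar>)" by (simp add: algebra_simps)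
    next
      show "integrable lborel (\<lambda>x. Vf x * \<bar>f x + c * g x\<bar>)"
        using inB_intV[OF sB] .
    qed auto
    then show ?thesis using iv by (simp add: L1w_eq[OF f] L1w_eq[OF g])
  qed
  show "L2_norm (\<lambda>x. indicator D x * (f x + c * g x)) \<le> L2_norm (\<lambda>x. indicator D x * f x) + \<bar>c\<bar> * L2_norm (\<lambda>x. indicator D x * g x)"
  proof -
    have "(\<integral>x. (c * (indicator D x * g x))\<^sup>2 \<partial>lborel) = c\<^sup>2 * (\<integral>x. (indicator D x * g x)\<^sup>2 \<partial>lborel)"
      by (simp add: power_mult_distrib)
    then have "sqrt (\<integral>x. (c * (indicator D x * g x))\<^sup>2 \<partial>lborel) = \<bar>c\<bar> * L2_norm (\<lambda>x. indicator D x * g x)"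
      by (simp add: L2_norm_def real_sqrt_mult)
    then show ?thesis using mk(2) by (simp add: L2_norm_def algebra_simps)
  qed
  show "integral\<^sup>L lborel (\<lambda>x. f x + c * g x) = integral\<^sup>L lborel f + c * integral\<^sup>L lborel g"
    using ib by simp
qed


lemma transfer_op_L2_nn:
  assumes k: "kmeas k" and [measurable]: "u \<in> borel_measurable lborel" and Dm[measurable]: "D \<in> sets borel"
    and supp: "\<And>x y. x \<notin> D \<Longrightarrow> k x y = 0"
  shows "(\<integral>\<^sup>+y. (\<integral>\<^sup>+x. ennreal \<bar>k x y * u x\<bar> \<partial>lborel)\<^sup>2 \<partial>lborel)
     \<le> (\<integral>\<^sup>+z. ennreal ((k (fst z) (snd z))\<^sup>2) \<partial>(lborel \<Otimes>\<^sub>M lborel))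
        * (\<integral>\<^sup>+x. ennreal ((indicator D x * u x)\<^sup>2) \<partial>lborel)"
proof -
  have [measurable]: "(\<lambda>z. k (fst z) (snd z)) \<in> borel_measurable (lborel \<Otimes>\<^sub>M lborel)"
    using k unfolding kmeas_def .
  have [measurable]: "\<And>y. (\<lambda>x. k x y) \<in> borel_measurable borel" "\<And>x. (\<lambda>y. k x y) \<in> borel_measurable borel"
    using kmeas_sect1[OF k] kmeas_sect2[OF k] by auto
  have [measurable]: "(\<lambda>z. k (snd z) (fst z)) \<in> borel_measurable (lborel \<Otimes>\<^sub>M lborel)"
    using kmeas_swap[OF k] .
  have [measurable]: "(\<lambda>z. k (snd z) (fst z)) \<in> borel_measurable (borel \<Otimes>\<^sub>M borel)"
    using kmeas_swap[OF k] by (simp add: measurable_lborel2[symmetric] sets_pair_measure_cong)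
  let ?Q = "(\<integral>\<^sup>+x. ennreal ((indicator D x * u x)\<^sup>2) \<partial>lborel)"
  have pt: "(\<integral>\<^sup>+x. ennreal \<bar>k x y * u x\<bar> \<partial>lborel)\<^sup>2 \<le> (\<integral>\<^sup>+x. ennreal ((k x y)\<^sup>2) \<partial>lborel) * ?Q" for y
  proof -
    have "(\<integral>\<^sup>+x. ennreal \<bar>k x y * u x\<bar> \<partial>lborel)
        = (\<integral>\<^sup>+x. ennreal \<bar>k x y\<bar> * ennreal \<bar>indicator D x * u x\<bar> \<partial>lborel)"
      by (intro nn_integral_cong) (auto simp: supp ennreal_mult[symmetric] abs_mult indicator_def)
    also have "(\<dots>)\<^sup>2 \<le> (\<integral>\<^sup>+x. (ennreal \<bar>k x y\<bar>)^2 \<partial>lborel) * (\<integral>\<^sup>+x. (ennreal \<bar>indicator D x * u x\<bar>)^2 \<partial>lborel)"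
      by (rule Cauchy_Schwarz_nn_integral) auto
    also have "\<dots> = (\<integral>\<^sup>+x. ennreal ((k x y)\<^sup>2) \<partial>lborel) * ?Q"
      by (simp add: ennreal_power)
    finally show ?thesis .
  qed
  have "(\<integral>\<^sup>+y. (\<integral>\<^sup>+x. ennreal \<bar>k x y * u x\<bar> \<partial>lborel)\<^sup>2 \<partial>lborel)
      \<le> (\<integral>\<^sup>+y. (\<integral>\<^sup>+x. ennreal ((k x y)\<^sup>2) \<partial>lborel) * ?Q \<partial>lborel)"
    by (intro nn_integral_mono pt)
  also have "\<dots> = (\<integral>\<^sup>+y. (\<integral>\<^sup>+x. ennreal ((k x y)\<^sup>2) \<partial>lborel) \<partial>lborel) * ?Q"
    by (rule nn_integral_multc) measurable
  also have "(\<integral>\<^sup>+y. (\<integral>\<^sup>+x. ennreal ((k x y)\<^sup>2) \<partial>lborel) \<partial>lborel)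
     = (\<integral>\<^sup>+x. (\<integral>\<^sup>+y. ennreal ((k x y)\<^sup>2) \<partial>lborel) \<partial>lborel)"
    by (rule lborel_pair.Fubini') measurable
  also have "\<dots> = (\<integral>\<^sup>+z. ennreal ((k (fst z) (snd z))\<^sup>2) \<partial>(lborel \<Otimes>\<^sub>M lborel))"
    by (subst lborel.nn_integral_fst[symmetric]) (auto)
  finally show ?thesis .
qed

lemma nn_Q: "in_B D u \<Longrightarrow> (\<integral>\<^sup>+x. ennreal ((indicator D x * u x)\<^sup>2) \<partial>lborel) = ennreal ((L2_norm (\<lambda>x. indicator D x * u x))\<^sup>2)"
  by (subst nn_integral_eq_integral[OF inB_L2]) (auto simp: L2_norm_def)

locale pert = kern \<kappa> D C0 \<gamma> Cd for \<kappa> :: "'a::euclidean_space \<Rightarrow> 'a \<Rightarrow> real" and D C0 \<gamma> Cd +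
  fixes p :: "'a \<Rightarrow> 'a \<Rightarrow> real" and \<epsilon> VD :: real
  assumes pm: "kmeas p"
   and psupp: "\<And>x y. x \<notin> D \<or> y \<notin> D \<Longrightarrow> p x y = 0"
   and pL2: "(\<integral>\<^sup>+z. ennreal ((p (fst z) (snd z))\<^sup>2) \<partial>(lborel \<Otimes>\<^sub>M lborel)) \<le> ennreal (\<epsilon>\<^sup>2)"
   and eps: "0 \<le> \<epsilon>"
   and VD: "\<And>y. y \<in> D \<Longrightarrow> Vf y \<le> VD"
   and pres: "\<And>g. integrable lborel g \<Longrightarrow> integrable lborel (transfer_op (\<lambda>x y. \<kappa> x y + p x y) g)
        \<Longrightarrow> (\<integral>y. transfer_op (\<lambda>x y. \<kappa> x y + p x y) g y \<partial>lborel) = (\<integral>x. g x \<partial>lborel)"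
begin

abbreviation "Qn u \<equiv> L2_norm (\<lambda>x. indicator D x * u x)"

lemma VD_pos: "1 \<le> VD" using Vf_ge1 VD Dpos by (metis emeasure_empty equals0I measure_empty order_trans less_irrefl)

lemma pm_sect[measurable]: "(\<lambda>x. p x y) \<in> borel_measurable borel" "(\<lambda>y. p x y) \<in> borel_measurable borel"
  using kmeas_sect1[OF pm] kmeas_sect2[OF pm] by auto

lemma P_nn: assumes u: "in_B D u"
  shows "(\<integral>\<^sup>+y. (\<integral>\<^sup>+x. ennreal \<bar>p x y * u x\<bar> \<partial>lborel)\<^sup>2 \<partial>lborel) \<le> ennreal (\<epsilon>\<^sup>2 * (Qn u)\<^sup>2)"
proof -
  have [measurable]: "u \<in> borel_measurable borel" using inB_meas[OF u] .
  have "(\<integral>\<^sup>+y. (\<integral>\<^sup>+x. ennreal \<bar>p x y * u x\<bar> \<partial>lborel)\<^sup>2 \<partial>lborel)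
     \<le> (\<integral>\<^sup>+z. ennreal ((p (fst z) (snd z))\<^sup>2) \<partial>(lborel \<Otimes>\<^sub>M lborel)) * ennreal ((Qn u)\<^sup>2)"
    using transfer_op_L2_nn[OF pm, of u D] psupp by (simp add: nn_Q[OF u])
  also have "\<dots> \<le> ennreal (\<epsilon>\<^sup>2) * ennreal ((Qn u)\<^sup>2)" by (intro mult_right_mono pL2) auto
  finally show ?thesis by (simp add: ennreal_mult)
qed

lemma P_ae_int: assumes u: "in_B D u" shows "AE y in lborel. integrable lborel (\<lambda>x. p x y * u x)"
proof -
  have [measurable]: "u \<in> borel_measurable borel" using inB_meas[OF u] .
  have [measurable]: "(\<lambda>z. p (snd z) (fst z)) \<in> borel_measurable (borel \<Otimes>\<^sub>M borel)"
    using kmeas_swap[OF pm] by (simp add: measurable_lborel2[symmetric] sets_pair_measure_cong)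
  have "AE y in lborel. (\<integral>\<^sup>+x. ennreal \<bar>p x y * u x\<bar> \<partial>lborel)\<^sup>2 \<noteq> \<infinity>"
    using P_nn[OF u] by (intro nn_integral_PInf_AE) (auto simp: top_unique)
  then show ?thesis
  proof eventually_elim
    case (elim y)
    then have "(\<integral>\<^sup>+x. ennreal \<bar>p x y * u x\<bar> \<partial>lborel) < \<infinity>" by (simp add: less_top power_eq_top_ennreal)
    then show ?case by (intro integrableI_bounded) auto
  qed
qed

lemma P_zero: "y \<notin> D \<Longrightarrow> transfer_op p u y = 0"
  by (simp add: transfer_op_def psupp)

end

context pert begin

lemma P_sq: assumes u: "in_B D u"
  shows "integrable lborel (\<lambda>y. (transfer_op p u y)\<^sup>2)"
    "(\<integral>y. (transfer_op p u y)\<^sup>2 \<partial>lborel) \<le> \<epsilon>\<^sup>2 * (Qn u)\<^sup>2"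
proof -
  have [measurable]: "u \<in> borel_measurable borel" using inB_meas[OF u] .
  have [measurable]: "transfer_op p u \<in> borel_measurable borel" using transfer_op_meas[OF pm, of u] by simp
  have le: "(\<integral>\<^sup>+y. ennreal ((transfer_op p u y)\<^sup>2) \<partial>lborel) \<le> ennreal (\<epsilon>\<^sup>2 * (Qn u)\<^sup>2)"
  proof -
    have "(\<integral>\<^sup>+y. ennreal ((transfer_op p u y)\<^sup>2) \<partial>lborel) \<le> (\<integral>\<^sup>+y. (\<integral>\<^sup>+x. ennreal \<bar>p x y * u x\<bar> \<partial>lborel)\<^sup>2 \<partial>lborel)"
    proof (intro nn_integral_mono)
      fix y
      have "ennreal ((transfer_op p u y)\<^sup>2) = (ennreal \<bar>transfer_op p u y\<bar>)\<^sup>2" by (simp add: ennreal_power)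
      also have "\<dots> \<le> (\<integral>\<^sup>+x. ennreal \<bar>p x y * u x\<bar> \<partial>lborel)\<^sup>2" by (intro power_mono transfer_op_bound) auto
      finally show "ennreal ((transfer_op p u y)\<^sup>2) \<le> (\<integral>\<^sup>+x. ennreal \<bar>p x y * u x\<bar> \<partial>lborel)\<^sup>2" .
    qed
    also have "\<dots> \<le> ennreal (\<epsilon>\<^sup>2 * (Qn u)\<^sup>2)" by (rule P_nn[OF u])
    finally show ?thesis .
  qed
  show int: "integrable lborel (\<lambda>y. (transfer_op p u y)\<^sup>2)"
    by (rule integrableI_bounded) (use le in \<open>auto simp: order_le_less_trans\<close>)
  have "ennreal (\<integral>y. (transfer_op p u y)\<^sup>2 \<partial>lborel) \<le> ennreal (\<epsilon>\<^sup>2 * (Qn u)\<^sup>2)"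
    using le by (subst nn_integral_eq_integral[OF int, symmetric]) auto
  then show "(\<integral>y. (transfer_op p u y)\<^sup>2 \<partial>lborel) \<le> \<epsilon>\<^sup>2 * (Qn u)\<^sup>2"
    by (simp add: ennreal_le_iff)
qed

lemma P_ind: "indicator D y * transfer_op p u y = transfer_op p u y"
  by (auto simp: indicator_def P_zero)

lemma P_Q: assumes u: "in_B D u" shows "Qn (transfer_op p u) \<le> \<epsilon> * Qn u"
proof -
  have "Qn (transfer_op p u) = sqrt (\<integral>y. (transfer_op p u y)\<^sup>2 \<partial>lborel)" by (simp add: L2_norm_def P_ind)
  also have "\<dots> \<le> sqrt (\<epsilon>\<^sup>2 * (Qn u)\<^sup>2)" using P_sq(2)[OF u] by (rule real_sqrt_le_mono)
  also have "\<dots> = \<epsilon> * Qn u" using eps L2_nonneg by (simp add: real_sqrt_mult abs_of_nonneg[OF L2_nonneg])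
  finally show ?thesis .
qed

lemma P_L1: assumes u: "in_B D u"
  shows "integrable lborel (\<lambda>y. \<bar>transfer_op p u y\<bar>)"
    "L1_norm (transfer_op p u) \<le> sqrt (measure lborel D) * (\<epsilon> * Qn u)"
proof -
  have [measurable]: "u \<in> borel_measurable borel" using inB_meas[OF u] .
  have [measurable]: "transfer_op p u \<in> borel_measurable borel" using transfer_op_meas[OF pm, of u] by simp
  have ind2: "(\<lambda>x. (indicator D x :: real)\<^sup>2) = indicator D" by (auto simp: indicator_def fun_eq_iff)
  then have iD2: "integrable lborel (\<lambda>x. (indicator D x :: real)\<^sup>2)" using int_indD by simp
  note cs = CS_real[where a="indicator D" and b="transfer_op p u" and M=lborel, OF _ _ iD2 P_sq(1)[OF u], simplified]
  show "integrable lborel (\<lambda>y. \<bar>transfer_op p u y\<bar>)"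
    using integrable_abs[OF cs(1)] by (simp add: P_ind)
  have "(L1_norm (transfer_op p u))\<^sup>2 \<le> measure lborel D * (\<epsilon>\<^sup>2 * (Qn u)\<^sup>2)"
  proof -
    have "(L1_norm (transfer_op p u))\<^sup>2 \<le> (\<integral>x. (indicator D x :: real)\<^sup>2 \<partial>lborel) * (\<integral>y. (transfer_op p u y)\<^sup>2 \<partial>lborel)"
      using cs(2) by (simp add: L1_norm_def abs_mult P_ind[unfolded indicator_def] indicator_def)
    also have "\<dots> \<le> measure lborel D * (\<epsilon>\<^sup>2 * (Qn u)\<^sup>2)"
      by (intro mult_mono P_sq(2)[OF u]) (auto simp: ind2)
    finally show ?thesis .
  qed
  then have "sqrt ((L1_norm (transfer_op p u))\<^sup>2) \<le> sqrt (measure lborel D * (\<epsilon>\<^sup>2 * (Qn u)\<^sup>2))"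
    by (rule real_sqrt_le_mono)
  then show "L1_norm (transfer_op p u) \<le> sqrt (measure lborel D) * (\<epsilon> * Qn u)"
    using eps by (simp add: real_sqrt_mult abs_of_nonneg[OF L2_nonneg] abs_of_nonneg[OF L1_nonneg])
qed

lemma P_inB: assumes u: "in_B D u" shows "in_B D (transfer_op p u)"
  and "L1w_norm 2 (transfer_op p u) \<le> VD * L1_norm (transfer_op p u)"
proof -
  have [measurable]: "u \<in> borel_measurable borel" using inB_meas[OF u] .
  have [measurable]: "transfer_op p u \<in> borel_measurable borel" using transfer_op_meas[OF pm, of u] by simp
  have pt: "Vf y * \<bar>transfer_op p u y\<bar> \<le> VD * \<bar>transfer_op p u y\<bar>" for y
    by (cases "y \<in> D") (auto simp: P_zero VD intro!: mult_right_mono)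
  have iV: "integrable lborel (\<lambda>y. VD * \<bar>transfer_op p u y\<bar>)" using P_L1(1)[OF u] by simp
  have i1: "integrable lborel (\<lambda>y. rho 2 y * transfer_op p u y)"
    by (rule Bochner_Integration.integrable_bound[OF iV])
       (use pt VD_pos in \<open>auto intro!: AE_I2 simp: rho2 abs_mult abs_of_nonneg Vf_nonneg\<close>)
  show "in_B D (transfer_op p u)" using i1 P_sq(1)[OF u] by (simp add: in_B_def P_ind)
  have "L1w_norm 2 (transfer_op p u) \<le> (\<integral>y. VD * \<bar>transfer_op p u y\<bar> \<partial>lborel)"
    unfolding L1w_norm_def rho2 using iV inB_intV[OF \<open>in_B D (transfer_op p u)\<close>]
    by (intro integral_mono pt) auto
  then show "L1w_norm 2 (transfer_op p u) \<le> VD * L1_norm (transfer_op p u)" by (simp add: L1_norm_def)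
qed

end

lemma kmeas_add: "kmeas k1 \<Longrightarrow> kmeas k2 \<Longrightarrow> kmeas (\<lambda>x y. k1 x y + k2 x y)"
  unfolding kmeas_def by (rule borel_measurable_add)

context pert begin

abbreviation "Kp \<equiv> (\<lambda>x y. \<kappa> x y + p x y)"

lemma Kp_meas: "kmeas Kp" by (rule kmeas_add[OF km pm])

lemma Kp_sect[measurable]: "(\<lambda>x. Kp x y) \<in> borel_measurable borel"
  by measurable

lemma T_ae: assumes u: "in_B D u"
  shows "AE y in lborel. transfer_op Kp u y = transfer_op \<kappa> u y + transfer_op p u y"
  using P_ae_int[OF u]
proof eventually_elim
  case (elim y)
  have "transfer_op Kp u y = (\<integral>x. \<kappa> x y * u x + p x y * u x \<partial>lborel)"
    unfolding transfer_op_def by (simp add: algebra_simps)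
  also have "\<dots> = transfer_op \<kappa> u y + transfer_op p u y"
    using int_k[OF u] elim by (simp add: transfer_op_def)
  finally show ?case .
qed

lemma T_inB: assumes u: "in_B D u"
  shows "in_B D (transfer_op Kp u)"
    "L1_norm (transfer_op Kp u) \<le> L1_norm (transfer_op \<kappa> u) + L1_norm (transfer_op p u)"
    "L1w_norm 2 (transfer_op Kp u) \<le> L1w_norm 2 (transfer_op \<kappa> u) + L1w_norm 2 (transfer_op p u)"
    "Qn (transfer_op Kp u) \<le> Qn (transfer_op \<kappa> u) + Qn (transfer_op p u)"
    "(\<integral>y. transfer_op Kp u y \<partial>lborel) = (\<integral>x. u x \<partial>lborel)"
proof -
  note add = inB_add[OF D_sets Lop_inB[OF u] P_inB(1)[OF u], of 1]
  have [measurable]: "u \<in> borel_measurable borel" using inB_meas[OF u] .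
  have m: "transfer_op Kp u \<in> borel_measurable borel" using transfer_op_meas[OF Kp_meas, of u] by simp
  have ae: "AE y in lborel. transfer_op Kp u y = transfer_op \<kappa> u y + 1 * transfer_op p u y"
    using T_ae[OF u] by simp
  note e = inB_AE[OF D_sets add(1) m ae]
  show iB: "in_B D (transfer_op Kp u)" by (rule e(1))
  show "L1_norm (transfer_op Kp u) \<le> L1_norm (transfer_op \<kappa> u) + L1_norm (transfer_op p u)"
    using e(2) add(2) by simp
  show "L1w_norm 2 (transfer_op Kp u) \<le> L1w_norm 2 (transfer_op \<kappa> u) + L1w_norm 2 (transfer_op p u)"
    using e(3) add(3) by simp
  show "Qn (transfer_op Kp u) \<le> Qn (transfer_op \<kappa> u) + Qn (transfer_op p u)"
    using e(4) add(4) by simp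
  show "(\<integral>y. transfer_op Kp u y \<partial>lborel) = (\<integral>x. u x \<partial>lborel)"
    using pres[OF inB_int[OF u] inB_int[OF iB]] .
qed

lemma T_lin: assumes u: "in_B D u" and v: "in_B D v"
  shows "AE y in lborel. transfer_op Kp (\<lambda>x. u x + c * v x) y = transfer_op Kp u y + c * transfer_op Kp v y"
  using P_ae_int[OF u] P_ae_int[OF v]
proof eventually_elim
  case (elim y)
  have iu: "integrable lborel (\<lambda>x. Kp x y * u x)"
    using int_k[OF u] elim(1) by (simp add: distrib_right)
  have iv: "integrable lborel (\<lambda>x. Kp x y * v x)"
    using int_k[OF v] elim(2) by (simp add: distrib_right)
  have "transfer_op Kp (\<lambda>x. u x + c * v x) y = (\<integral>x. Kp x y * u x + c * (Kp x y * v x) \<partial>lborel)"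
    unfolding transfer_op_def by (simp add: algebra_simps)
  also have "\<dots> = transfer_op Kp u y + c * transfer_op Kp v y"
    using iu iv by (simp add: transfer_op_def)
  finally show ?case .
qed

lemma T_cong: assumes [measurable]: "u \<in> borel_measurable borel" "v \<in> borel_measurable borel"
    and ae: "AE x in lborel. u x = v x"
  shows "transfer_op Kp u = transfer_op Kp v"
proof
  fix y show "transfer_op Kp u y = transfer_op Kp v y"
    unfolding transfer_op_def by (intro integral_cong_AE) (use ae in auto)
qed

lemma T_pow_inB: "in_B D u \<Longrightarrow> in_B D ((transfer_op Kp ^^ n) u)"
  by (induction n) (auto intro: T_inB(1))

lemma T_pow_int: "in_B D u \<Longrightarrow> (\<integral>y. (transfer_op Kp ^^ n) u y \<partial>lborel) = (\<integral>x. u x \<partial>lborel)"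
  by (induction n) (auto simp: T_inB(5) T_pow_inB)

lemma T_pow_lin: assumes u: "in_B D u" and v: "in_B D v"
  shows "AE y in lborel. (transfer_op Kp ^^ n) (\<lambda>x. u x + c * v x) y = (transfer_op Kp ^^ n) u y + c * (transfer_op Kp ^^ n) v y"
proof (induction n)
  case 0 then show ?case by simp
next
  case (Suc n)
  let ?a = "(transfer_op Kp ^^ n) (\<lambda>x. u x + c * v x)"
  let ?u = "(transfer_op Kp ^^ n) u" and ?v = "(transfer_op Kp ^^ n) v"
  have sB: "in_B D (\<lambda>x. u x + c * v x)" using inB_add(1)[OF D_sets u v] .
  have "transfer_op Kp ?a = transfer_op Kp (\<lambda>x. ?u x + c * ?v x)"
    using Suc inB_meas[OF T_pow_inB[OF sB]] inB_meas[OF inB_add(1)[OF D_sets T_pow_inB[OF u] T_pow_inB[OF v]]]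
    by (intro T_cong) auto
  then show ?case using T_lin[OF T_pow_inB[OF u] T_pow_inB[OF v], where c=c] by simp
qed

end

definition Nn :: "real \<Rightarrow> real \<Rightarrow> 'a::euclidean_space set \<Rightarrow> ('a \<Rightarrow> real) \<Rightarrow> real" where
  "Nn \<beta> \<tau> D g = L1_norm g + \<beta> * L1w_norm 2 g + \<tau> * L2_norm (\<lambda>x. indicator D x * g x)"

lemma coef_a0:
  fixes e c s C0 :: real
  assumes "c \<noteq> 0" "s \<noteq> 0"
  shows "(e / (8 * c * s)) * (C0 * s) = (e / 8) * (C0 / c)"
  using assms by (simp add: field_simps)

lemma coef_a:
  fixes e Cd C0 sD :: real
  assumes "e > 0" "Cd \<ge> 0" "C0 \<ge> 0" "sD > 0"
  shows "1 - e + (3 * e / (4 * (Cd + 1))) * Cd + (e / (8 * (C0 + 1) * sD)) * (C0 * sD) \<le> 1 - e / 8"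
proof -
  have "(3 * e / (4 * (Cd + 1))) * Cd = (3 * e / 4) * (Cd / (Cd + 1))" using assms by simp
  also have "\<dots> \<le> (3 * e / 4) * 1" using assms by (intro mult_left_mono) auto
  finally have 1: "(3 * e / (4 * (Cd + 1))) * Cd \<le> 3 * e / 4" by simp
  have "(e / (8 * (C0 + 1) * sD)) * (C0 * sD) = (e / 8) * (C0 / (C0 + 1))"
    using assms by (intro coef_a0) auto
  also have "\<dots> \<le> (e / 8) * 1" using assms by (intro mult_left_mono) auto
  finally have 2: "(e / (8 * (C0 + 1) * sD)) * (C0 * sD) \<le> e / 8" by simp
  from 1 2 show ?thesis by linarith
qed

lemma coef_w0:
  fixes e c \<gamma> :: real
  assumes "c \<noteq> 0" "1 - \<gamma> \<noteq> 0"
  shows "2 * e / (c / (1 - \<gamma>)) + (3 * e / c) * \<gamma> = (3 * e / c) * ((2 + \<gamma>) / 3)"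
  using assms by (simp add: field_simps)

lemma coef_w:
  fixes e Cd \<gamma> :: real
  assumes "e > 0" "Cd \<ge> 0" "\<gamma> < 1"
  shows "2 * e / (4 * (Cd + 1) / (1 - \<gamma>)) + (3 * e / (4 * (Cd + 1))) * \<gamma> = (3 * e / (4 * (Cd + 1))) * ((2 + \<gamma>) / 3)"
  using assms by (intro coef_w0) auto

context pert begin

lemma one_step:
  assumes u: "in_B D u"
  shows "L1_norm (transfer_op Kp u) \<le> L1_norm (transfer_op \<kappa> u) + sqrt (measure lborel D) * \<epsilon> * Qn u"
    "L1w_norm 2 (transfer_op Kp u) \<le> \<gamma> * L1w_norm 2 u + Cd * L1_norm u + VD * sqrt (measure lborel D) * \<epsilon> * Qn u"
    "Qn (transfer_op Kp u) \<le> C0 * sqrt (measure lborel D) * L1_norm u + \<epsilon> * Qn u"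
proof -
  note P = P_L1[OF u] P_inB[OF u] P_Q[OF u]
  show "L1_norm (transfer_op Kp u) \<le> L1_norm (transfer_op \<kappa> u) + sqrt (measure lborel D) * \<epsilon> * Qn u"
    using T_inB(2)[OF u] P(2) by (simp add: mult.assoc)
  have "VD * L1_norm (transfer_op p u) \<le> VD * (sqrt (measure lborel D) * (\<epsilon> * Qn u))"
    using VD_pos P(2) by (intro mult_left_mono) auto
  then show "L1w_norm 2 (transfer_op Kp u) \<le> \<gamma> * L1w_norm 2 u + Cd * L1_norm u + VD * sqrt (measure lborel D) * \<epsilon> * Qn u"
    using T_inB(3)[OF u] Lop_W[OF u] P(4) by (simp add: mult.assoc)
  show "Qn (transfer_op Kp u) \<le> C0 * sqrt (measure lborel D) * L1_norm u + \<epsilon> * Qn u"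
    using T_inB(4)[OF u] Lop_Q[OF u] P(5) by simp
qed

lemma contraction:
  assumes e: "e > 0"
    and H: "\<And>g. in_B D g \<Longrightarrow> (\<integral>x. g x \<partial>lborel) = 0 \<Longrightarrow>
      L1_norm (transfer_op \<kappa> g) \<le> (1 - e) * L1_norm g + 2 * e / (4 * (Cd + 1) / (1 - \<gamma>)) * L1w_norm 2 g"
    and bdef: "\<beta> = 3 * e / (4 * (Cd + 1))"
    and tdef: "\<tau> = e / (8 * (C0 + 1) * sqrt (measure lborel D))"
    and epsle: "\<epsilon> * (sqrt (measure lborel D) + \<beta> * (VD * sqrt (measure lborel D)) + \<tau>) \<le> \<tau> / 2"
    and adef: "\<alpha> = max (1 - e / 8) (max ((2 + \<gamma>) / 3) (1 / 2))"
    and g: "in_B D g" and g0: "(\<integral>x. g x \<partial>lborel) = 0"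
  shows "Nn \<beta> \<tau> D (transfer_op Kp g) \<le> \<alpha> * Nn \<beta> \<tau> D g"
proof -
  define sD where "sD = sqrt (measure lborel D)"
  have sD: "sD > 0" using Dpos by (simp add: sD_def)
  have b0: "\<beta> > 0" using e Cd by (simp add: bdef)
  have t0: "\<tau> > 0" using e C0_nonneg sD by (simp add: tdef sD_def[symmetric])
  define a where "a = L1_norm g"
  define w where "w = L1w_norm 2 g"
  define q where "q = Qn g"
  have a0: "a \<ge> 0" "w \<ge> 0" "q \<ge> 0" by (auto simp: a_def w_def q_def L1_nonneg W_nonneg L2_nonneg)
  note os = one_step[OF g, folded sD_def]
  have L1T: "L1_norm (transfer_op Kp g) \<le> (1 - e) * a + 2 * e / (4 * (Cd + 1) / (1 - \<gamma>)) * w + sD * \<epsilon> * q"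
    using os(1) H[OF g g0] by (simp add: a_def w_def q_def)
  have WT: "L1w_norm 2 (transfer_op Kp g) \<le> \<gamma> * w + Cd * a + VD * sD * \<epsilon> * q"
    using os(2) by (simp add: a_def w_def q_def)
  have QT: "Qn (transfer_op Kp g) \<le> C0 * sD * a + \<epsilon> * q"
    using os(3) by (simp add: a_def w_def q_def)
  have "Nn \<beta> \<tau> D (transfer_op Kp g) \<le> ((1 - e) * a + 2 * e / (4 * (Cd + 1) / (1 - \<gamma>)) * w + sD * \<epsilon> * q)
       + \<beta> * (\<gamma> * w + Cd * a + VD * sD * \<epsilon> * q) + \<tau> * (C0 * sD * a + \<epsilon> * q)"
    unfolding Nn_def using L1T mult_left_mono[OF WT, of \<beta>] mult_left_mono[OF QT, of \<tau>] b0 t0 by linarith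
  also have "\<dots> = (1 - e + \<beta> * Cd + \<tau> * (C0 * sD)) * a + (2 * e / (4 * (Cd + 1) / (1 - \<gamma>)) + \<beta> * \<gamma>) * w
      + (\<epsilon> * (sD + \<beta> * (VD * sD) + \<tau>)) * q"
    by (simp add: algebra_simps)
  also have "\<dots> \<le> \<alpha> * a + (\<alpha> * \<beta>) * w + (\<alpha> * \<tau>) * q"
  proof -
    have ca: "1 - e + \<beta> * Cd + \<tau> * (C0 * sD) \<le> \<alpha>"
    proof -
      have "1 - e / 8 \<le> \<alpha>" unfolding adef by (rule max.cobounded1)
      then show ?thesis using coef_a[OF e Cd C0_nonneg sD] unfolding bdef tdef sD_def[symmetric] by linarith
    qed
    have cw: "2 * e / (4 * (Cd + 1) / (1 - \<gamma>)) + \<beta> * \<gamma> \<le> \<alpha> * \<beta>"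
    proof -
      have "2 * e / (4 * (Cd + 1) / (1 - \<gamma>)) + \<beta> * \<gamma> = \<beta> * ((2 + \<gamma>) / 3)"
        using coef_w[OF e Cd gam(2)] by (simp add: bdef)
      also have "\<dots> \<le> \<beta> * \<alpha>"
      proof -
        have "(2 + \<gamma>) / 3 \<le> \<alpha>" unfolding adef by (rule max.coboundedI2, rule max.cobounded1)
        then show ?thesis using b0 by (intro mult_left_mono) auto
      qed
      finally show ?thesis by (simp add: mult_ac)
    qed
    have cq: "\<epsilon> * (sD + \<beta> * (VD * sD) + \<tau>) \<le> \<alpha> * \<tau>"
    proof -
      have "1/2 \<le> \<alpha>" unfolding adef by (rule max.coboundedI2, rule max.cobounded2)
      then have "\<tau> / 2 \<le> \<alpha> * \<tau>" using t0 mult_right_mono[of "1/2" \<alpha> \<tau>] by simp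
      then show ?thesis using epsle unfolding sD_def by linarith
    qed
    show ?thesis
      using mult_right_mono[OF ca a0(1)] mult_right_mono[OF cw a0(2)] mult_right_mono[OF cq a0(3)] by linarith
  qed
  also have "\<dots> = \<alpha> * Nn \<beta> \<tau> D g" by (simp add: Nn_def a_def w_def q_def algebra_simps)
  finally show ?thesis .
qed

end

context kern begin

definition "phiD = (\<lambda>x. indicator D x / measure lborel D)"

lemma phi_inB: "in_B D phiD" and phi_int: "(\<integral>x. phiD x \<partial>lborel) = 1"
proof -
  have [measurable]: "phiD \<in> borel_measurable borel" unfolding phiD_def by measurable
  obtain VD where VD: "\<And>y. y \<in> D \<Longrightarrow> Vf y \<le> VD"
  proof -
    have "compact (Vf ` D)" using Dc by (intro compact_continuous_image) (auto simp: Vf_def intro!: continuous_intros)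
    then obtain M where "\<forall>z\<in>Vf ` D. norm z \<le> M" using compact_imp_bounded bounded_iff by metis
    then have M: "norm (Vf y) \<le> M" if "y \<in> D" for y using that by blast
    have "Vf y \<le> M" if "y \<in> D" for y using M[OF that] Vf_nonneg[of y] by simp
    then show ?thesis using that by blast
  qed
  have "integrable lborel (\<lambda>x. VD / measure lborel D * indicator D x)"
    using int_indD by simp
  then have i1: "integrable lborel (\<lambda>x. rho 2 x * phiD x)"
    by (rule Bochner_Integration.integrable_bound)
      (use Dpos VD in \<open>auto intro!: AE_I2 simp: phiD_def rho2 indicator_def abs_of_nonneg Vf_nonneg\<close>, rule divide_right_mono[OF order_trans[OF VD abs_ge_self]], auto)
  have "integrable lborel (\<lambda>x. (1 / measure lborel D)\<^sup>2 * indicator D x)"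
    using int_indD by simp
  then have i2: "integrable lborel (\<lambda>x. (indicator D x * phiD x)\<^sup>2)"
    by (rule Bochner_Integration.integrable_bound) (auto intro!: AE_I2 simp: phiD_def indicator_def power_divide)
  show "in_B D phiD" using i1 i2 by (simp add: in_B_def)
  show "(\<integral>x. phiD x \<partial>lborel) = 1" using Dpos by (simp add: phiD_def)
qed

end

lemma s_add: assumes "D \<in> sets borel" "in_B D u" "in_B D v"
  shows "s_norm D (\<lambda>x. u x + c * v x) \<le> s_norm D u + \<bar>c\<bar> * s_norm D v"
  using inB_add(3,4)[OF assms, of c] by (simp add: s_norm_def algebra_simps)

lemma s_AE: assumes "D \<in> sets borel" "in_B D f" "h \<in> borel_measurable borel" "AE x in lborel. h x = f x"
  shows "s_norm D h = s_norm D f"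
  using inB_AE(3,4)[OF assms] by (simp add: s_norm_def)

lemma Q_nonneg: "0 \<le> L2_norm (\<lambda>x. indicator D x * u x)" by (rule L2_nonneg)

lemma s_nonneg: "0 \<le> s_norm D u" by (simp add: s_norm_def W_nonneg L2_nonneg)

locale cpert = pert \<kappa> D C0 \<gamma> Cd p \<epsilon> VD for \<kappa> :: "'a::euclidean_space \<Rightarrow> 'a \<Rightarrow> real" and D C0 \<gamma> Cd p \<epsilon> VD +
  fixes e \<beta> \<tau> \<alpha> :: real
  assumes e: "e > 0"
    and H: "\<And>g. in_B D g \<Longrightarrow> (\<integral>x. g x \<partial>lborel) = 0 \<Longrightarrow>
      L1_norm (transfer_op \<kappa> g) \<le> (1 - e) * L1_norm g + 2 * e / (4 * (Cd + 1) / (1 - \<gamma>)) * L1w_norm 2 g"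
    and bdef: "\<beta> = 3 * e / (4 * (Cd + 1))"
    and tdef: "\<tau> = e / (8 * (C0 + 1) * sqrt (measure lborel D))"
    and epsle: "\<epsilon> * (sqrt (measure lborel D) + \<beta> * (VD * sqrt (measure lborel D)) + \<tau>) \<le> \<tau> / 2"
    and adef: "\<alpha> = max (1 - e / 8) (max ((2 + \<gamma>) / 3) (1 / 2))"
    and eps1: "\<epsilon> \<le> 1"
begin

lemma Qn_nn: "0 \<le> Qn u" by (rule L2_nonneg)
lemma b0: "\<beta> > 0" using e Cd by (simp add: bdef)
lemma t0: "\<tau> > 0" using e C0_nonneg Dpos by (simp add: tdef)
lemma a0: "0 \<le> \<alpha>" unfolding adef by (simp add: le_max_iff_disj)
lemma a1: "\<alpha> < 1" unfolding adef using e gam by auto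

lemma N_nonneg: "0 \<le> Nn \<beta> \<tau> D g"
  unfolding Nn_def using b0 t0 L1_nonneg[of g] W_nonneg[of g] Qn_nn[of g] by (simp add: add_nonneg_nonneg)

lemma N_iter: assumes g: "in_B D g" and g0: "(\<integral>x. g x \<partial>lborel) = 0"
  shows "Nn \<beta> \<tau> D ((transfer_op Kp ^^ n) g) \<le> \<alpha> ^ n * Nn \<beta> \<tau> D g"
proof (induction n)
  case 0 then show ?case by simp
next
  case (Suc n)
  have "Nn \<beta> \<tau> D ((transfer_op Kp ^^ Suc n) g) \<le> \<alpha> * Nn \<beta> \<tau> D ((transfer_op Kp ^^ n) g)"
    using contraction[OF e H bdef tdef epsle adef T_pow_inB[OF g]] T_pow_int[OF g] g0 by simp
  also have "\<dots> \<le> \<alpha> * (\<alpha> ^ n * Nn \<beta> \<tau> D g)" using Suc a0 by (intro mult_left_mono) auto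
  finally show ?case by simp
qed

lemma s_le_N: assumes u: "in_B D u" shows "s_norm D u \<le> (1 / \<beta> + 1 / \<tau>) * Nn \<beta> \<tau> D u"
proof -
  have "L1w_norm 2 u \<le> (1/\<beta>) * (\<beta> * L1w_norm 2 u)" using b0 by simp
  also have "\<dots> \<le> (1/\<beta>) * Nn \<beta> \<tau> D u" unfolding Nn_def using b0 t0 L1_nonneg[of u] Qn_nn[of u]
    by (intro mult_left_mono) (auto intro!: add_nonneg_nonneg)
  finally have 1: "L1w_norm 2 u \<le> (1/\<beta>) * Nn \<beta> \<tau> D u" .
  have "Qn u \<le> (1/\<tau>) * (\<tau> * Qn u)" using t0 by simp
  also have "\<dots> \<le> (1/\<tau>) * Nn \<beta> \<tau> D u" unfolding Nn_def using b0 t0 L1_nonneg[of u] W_nonneg[of u]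
    by (intro mult_left_mono) (auto intro!: add_nonneg_nonneg mult_nonneg_nonneg)
  finally have 2: "Qn u \<le> (1/\<tau>) * Nn \<beta> \<tau> D u" .
  show ?thesis using 1 2 by (simp add: s_norm_def distrib_right)
qed

lemma N_le_s: assumes u: "in_B D u" shows "Nn \<beta> \<tau> D u \<le> (1 + \<beta> + \<tau>) * s_norm D u"
proof -
  have "L1_norm u \<le> s_norm D u" using L1_le_W[OF u] Qn_nn[of u] by (simp add: s_norm_def)
  moreover have "\<beta> * L1w_norm 2 u \<le> \<beta> * s_norm D u" using b0 Qn_nn[of u] by (simp add: s_norm_def)
  moreover have "\<tau> * Qn u \<le> \<tau> * s_norm D u" using t0 W_nonneg by (simp add: s_norm_def)
  ultimately show ?thesis unfolding Nn_def by (simp add: algebra_simps)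
qed

definition "K1 = \<gamma> + Cd + VD * sqrt (measure lborel D) + C0 * sqrt (measure lborel D) + 1"

lemma s_step: assumes u: "in_B D u" shows "s_norm D (transfer_op Kp u) \<le> K1 * s_norm D u"
proof -
  note os = one_step[OF u]
  have sD: "0 \<le> sqrt (measure lborel D)" by simp
  have L: "L1_norm u \<le> s_norm D u" using L1_le_W[OF u] Qn_nn[of u] by (simp add: s_norm_def)
  have W: "L1w_norm 2 u \<le> s_norm D u" using Qn_nn[of u] by (simp add: s_norm_def)
  have Q: "Qn u \<le> s_norm D u" using W_nonneg by (simp add: s_norm_def)
  have "\<gamma> * L1w_norm 2 u \<le> \<gamma> * s_norm D u" using W gam by (intro mult_left_mono) auto
  moreover have "Cd * L1_norm u \<le> Cd * s_norm D u" using L Cd by (intro mult_left_mono) auto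
  moreover have "VD * sqrt (measure lborel D) * \<epsilon> * Qn u \<le> VD * sqrt (measure lborel D) * s_norm D u"
  proof -
    have "\<epsilon> * Qn u \<le> 1 * s_norm D u" using eps eps1 Q Q_nonneg by (intro mult_mono) auto
    then show ?thesis using VD_pos sD by (simp add: mult.assoc mult_left_mono)
  qed
  moreover have "C0 * sqrt (measure lborel D) * L1_norm u \<le> C0 * sqrt (measure lborel D) * s_norm D u"
    using L C0_nonneg sD by (intro mult_left_mono) auto
  moreover have "\<epsilon> * Qn u \<le> 1 * s_norm D u" using eps eps1 Q Q_nonneg by (intro mult_mono) auto
  ultimately show ?thesis using os(2) os(3) by (simp add: s_norm_def K1_def algebra_simps)
qed

end


context cpert begin

definition "cs = 1 / \<beta> + 1 / \<tau>"
definition "cN = 1 + \<beta> + \<tau>"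
definition "Phi = s_norm D phiD + cs * cN * (K1 + 1) * s_norm D phiD / (1 - \<alpha>)"

lemma cs_pos: "cs > 0" unfolding cs_def using b0 t0 by (intro add_pos_pos divide_pos_pos) auto
lemma cN_pos: "cN > 0" using b0 t0 by (simp add: cN_def)

lemma T_meas: "in_B D u \<Longrightarrow> transfer_op Kp u \<in> borel_measurable borel"
  using inB_meas[OF T_inB(1)] .

lemma phi_iter: "s_norm D ((transfer_op Kp ^^ n) phiD) \<le> Phi"
proof -
  define h where "h = (\<lambda>x. transfer_op Kp phiD x + (-1) * phiD x)"
  have hB: "in_B D h" unfolding h_def by (rule inB_add(1)[OF D_sets T_inB(1)[OF phi_inB] phi_inB])
  have h0: "(\<integral>x. h x \<partial>lborel) = 0"
    unfolding h_def using inB_add(5)[OF D_sets T_inB(1)[OF phi_inB] phi_inB, of "-1"] T_inB(5)[OF phi_inB] by simp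
  have Tphi: "transfer_op Kp phiD = (\<lambda>x. phiD x + 1 * h x)" by (auto simp: h_def)
  have Nh: "Nn \<beta> \<tau> D h \<le> cN * (K1 + 1) * s_norm D phiD"
  proof -
    have "Nn \<beta> \<tau> D h \<le> cN * s_norm D h" using N_le_s[OF hB] by (simp add: cN_def)
    also have "s_norm D h \<le> s_norm D (transfer_op Kp phiD) + \<bar>-1\<bar> * s_norm D phiD"
      unfolding h_def by (rule s_add[OF D_sets T_inB(1)[OF phi_inB] phi_inB])
    also have "\<dots> \<le> K1 * s_norm D phiD + s_norm D phiD" using s_step[OF phi_inB] by simp
    finally show ?thesis using cN_pos by (simp add: algebra_simps mult_left_mono)
  qed
  have step: "s_norm D ((transfer_op Kp ^^ n) phiD) \<le> s_norm D phiD + cs * Nn \<beta> \<tau> D h * (\<Sum>k<n. \<alpha> ^ k)" for n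
  proof (induction n)
    case 0 then show ?case by simp
  next
    case (Suc n)
    have "(transfer_op Kp ^^ Suc n) phiD = (transfer_op Kp ^^ n) (\<lambda>x. phiD x + 1 * h x)"
      by (simp only: funpow_Suc_right comp_def Tphi)
    then have "s_norm D ((transfer_op Kp ^^ Suc n) phiD)
        = s_norm D (\<lambda>x. (transfer_op Kp ^^ n) phiD x + 1 * (transfer_op Kp ^^ n) h x)"
      using s_AE[OF D_sets inB_add(1)[OF D_sets T_pow_inB[OF phi_inB] T_pow_inB[OF hB]]
          inB_meas[OF T_pow_inB[OF inB_add(1)[OF D_sets phi_inB hB]]]
          T_pow_lin[OF phi_inB hB, of n 1]] by simp
    also have "\<dots> \<le> s_norm D ((transfer_op Kp ^^ n) phiD) + \<bar>1\<bar> * s_norm D ((transfer_op Kp ^^ n) h)"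
      by (rule s_add[OF D_sets T_pow_inB[OF phi_inB] T_pow_inB[OF hB]])
    also have "s_norm D ((transfer_op Kp ^^ n) h) \<le> cs * (\<alpha> ^ n * Nn \<beta> \<tau> D h)"
    proof -
      have "s_norm D ((transfer_op Kp ^^ n) h) \<le> cs * Nn \<beta> \<tau> D ((transfer_op Kp ^^ n) h)"
        using s_le_N[OF T_pow_inB[OF hB]] by (simp add: cs_def)
      also have "\<dots> \<le> cs * (\<alpha> ^ n * Nn \<beta> \<tau> D h)"
        using N_iter[OF hB h0] cs_pos by (intro mult_left_mono) auto
      finally show ?thesis .
    qed
    finally show ?case using Suc by (simp add: algebra_simps)
  qed
  have "(\<Sum>k<n. \<alpha> ^ k) \<le> 1 / (1 - \<alpha>)"
  proof -
    have "(\<Sum>k<n. \<alpha> ^ k) = (1 - \<alpha> ^ n) / (1 - \<alpha>)" using a1 by (simp add: sum_gp_strict)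
    also have "\<dots> \<le> 1 / (1 - \<alpha>)" using a0 a1 by (intro divide_right_mono) auto
    finally show ?thesis .
  qed
  then have "cs * Nn \<beta> \<tau> D h * (\<Sum>k<n. \<alpha> ^ k) \<le> cs * Nn \<beta> \<tau> D h * (1 / (1 - \<alpha>))"
    using cs_pos N_nonneg by (intro mult_left_mono) auto
  also have "\<dots> \<le> cs * (cN * (K1 + 1) * s_norm D phiD) * (1 / (1 - \<alpha>))"
    using Nh cs_pos a1 by (intro mult_right_mono mult_left_mono) auto
  finally have X: "cs * Nn \<beta> \<tau> D h * (\<Sum>k<n. \<alpha> ^ k) \<le> cs * (cN * (K1 + 1) * s_norm D phiD) * (1 / (1 - \<alpha>))" .
  have "cs * (cN * (K1 + 1) * s_norm D phiD) * (1 / (1 - \<alpha>)) = cs * cN * (K1 + 1) * s_norm D phiD / (1 - \<alpha>)" by simp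
  then show ?thesis using step[of n] X unfolding Phi_def by linarith
qed

definition "Aconst = cs * cN"
definition "Bconst = cs * cN * s_norm D phiD + Phi + 1"

lemma final:
  assumes f: "in_B D f"
  shows "in_B D ((transfer_op Kp ^^ n) f)"
    "s_norm D ((transfer_op Kp ^^ n) f) \<le> Aconst * \<alpha> ^ n * s_norm D f + Bconst * L1_norm f"
proof -
  show "in_B D ((transfer_op Kp ^^ n) f)" by (rule T_pow_inB[OF f])
  define m where "m = (\<integral>x. f x \<partial>lborel)"
  have m_le: "\<bar>m\<bar> \<le> L1_norm f" unfolding m_def L1_norm_def by (rule integral_abs_bound)
  define g where "g = (\<lambda>x. f x + (-m) * phiD x)"
  have gB: "in_B D g" unfolding g_def by (rule inB_add(1)[OF D_sets f phi_inB])
  have g0: "(\<integral>x. g x \<partial>lborel) = 0"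
    unfolding g_def using inB_add(5)[OF D_sets f phi_inB, of "-m"] phi_int by (simp add: m_def)
  have feq: "f = (\<lambda>x. g x + m * phiD x)" by (auto simp: g_def)
  have "s_norm D ((transfer_op Kp ^^ n) f)
      = s_norm D (\<lambda>x. (transfer_op Kp ^^ n) g x + m * (transfer_op Kp ^^ n) phiD x)"
    using s_AE[OF D_sets inB_add(1)[OF D_sets T_pow_inB[OF gB] T_pow_inB[OF phi_inB]]
          inB_meas[OF T_pow_inB[OF f]]] T_pow_lin[OF gB phi_inB, of n m] feq by simp
  also have "\<dots> \<le> s_norm D ((transfer_op Kp ^^ n) g) + \<bar>m\<bar> * s_norm D ((transfer_op Kp ^^ n) phiD)"
    by (rule s_add[OF D_sets T_pow_inB[OF gB] T_pow_inB[OF phi_inB]])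
  also have "s_norm D ((transfer_op Kp ^^ n) g) \<le> cs * (\<alpha> ^ n * (cN * (s_norm D f + \<bar>m\<bar> * s_norm D phiD)))"
  proof -
    have "s_norm D ((transfer_op Kp ^^ n) g) \<le> cs * Nn \<beta> \<tau> D ((transfer_op Kp ^^ n) g)"
      using s_le_N[OF T_pow_inB[OF gB]] by (simp add: cs_def)
    also have "\<dots> \<le> cs * (\<alpha> ^ n * Nn \<beta> \<tau> D g)"
      using N_iter[OF gB g0] cs_pos by (intro mult_left_mono) auto
    also have "Nn \<beta> \<tau> D g \<le> cN * (s_norm D f + \<bar>m\<bar> * s_norm D phiD)"
    proof -
      have "Nn \<beta> \<tau> D g \<le> cN * s_norm D g" using N_le_s[OF gB] by (simp add: cN_def)
      also have "s_norm D g \<le> s_norm D f + \<bar>-m\<bar> * s_norm D phiD"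
        unfolding g_def by (rule s_add[OF D_sets f phi_inB])
      finally show ?thesis using cN_pos by (simp add: mult_left_mono)
    qed
    then have "cs * (\<alpha> ^ n * Nn \<beta> \<tau> D g) \<le> cs * (\<alpha> ^ n * (cN * (s_norm D f + \<bar>m\<bar> * s_norm D phiD)))"
      using cs_pos a0 by (intro mult_left_mono) auto
    finally show ?thesis .
  qed
  also have "\<bar>m\<bar> * s_norm D ((transfer_op Kp ^^ n) phiD) \<le> \<bar>m\<bar> * Phi"
    using phi_iter by (intro mult_left_mono) auto
  finally have 1: "s_norm D ((transfer_op Kp ^^ n) f)
      \<le> Aconst * \<alpha> ^ n * s_norm D f + (cs * cN * \<alpha> ^ n * s_norm D phiD + Phi) * \<bar>m\<bar>"
    by (simp add: Aconst_def algebra_simps)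
  have an: "\<alpha> ^ n \<le> 1" using a0 a1 by (simp add: power_le_one)
  have "cs * cN * \<alpha> ^ n * s_norm D phiD \<le> cs * cN * 1 * s_norm D phiD"
    using cs_pos cN_pos an s_nonneg by (intro mult_right_mono mult_left_mono) auto
  then have "(cs * cN * \<alpha> ^ n * s_norm D phiD + Phi) * \<bar>m\<bar> \<le> Bconst * \<bar>m\<bar>"
    by (intro mult_right_mono) (auto simp: Bconst_def)
  also have "\<dots> \<le> Bconst * L1_norm f"
  proof -
    have "0 \<le> Phi"
    proof -
      have "0 \<le> s_norm D ((transfer_op Kp ^^ 0) phiD)" by (rule s_nonneg)
      also have "\<dots> \<le> Phi" by (rule phi_iter)
      finally show ?thesis .
    qed
    then have "0 \<le> Bconst" using cs_pos cN_pos s_nonneg[of D phiD] by (simp add: Bconst_def)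
    then show ?thesis using m_le by (intro mult_left_mono) auto
  qed
  finally show "s_norm D ((transfer_op Kp ^^ n) f) \<le> Aconst * \<alpha> ^ n * s_norm D f + Bconst * L1_norm f"
    using 1 by linarith
qed

end

lemma flow_bound:
  fixes b :: "'a::euclidean_space \<Rightarrow> 'a"
  assumes flow: "is_flow b \<theta>" and c2: "c2 > 0" and diss: "\<And>x. inner (b x) x \<le> c1 - c2 * (norm x)\<^sup>2"
  shows "(norm (\<theta> 1 x))\<^sup>2 \<le> exp (-2 * c2) * (norm x)\<^sup>2 + \<bar>c1\<bar> / c2"
proof -
  have th0: "\<theta> 0 x = x" and thd: "\<And>t. t \<ge> 0 \<Longrightarrow> ((\<lambda>s. \<theta> s x) has_vector_derivative b (\<theta> t x)) (at t within {0..})"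
    using flow by (auto simp: is_flow_def)
  define v where "v t = exp (2 * c2 * t) * (\<theta> t x \<bullet> \<theta> t x - c1 / c2)" for t
  have dv: "(v has_real_derivative exp (2 * c2 * t) * (2 * c2) * (\<theta> t x \<bullet> \<theta> t x - c1 / c2)
            + exp (2 * c2 * t) * (2 * (\<theta> t x \<bullet> b (\<theta> t x)))) (at t within {0..})" if t: "t \<ge> 0" for t
  proof -
    have d1: "((\<lambda>s. \<theta> s x) has_derivative (\<lambda>h. h *\<^sub>R b (\<theta> t x))) (at t within {0..})"
      using thd[OF t] by (simp add: has_vector_derivative_def)
    have "((\<lambda>s. \<theta> s x \<bullet> \<theta> s x) has_derivative (\<lambda>h. \<theta> t x \<bullet> (h *\<^sub>R b (\<theta> t x)) + (h *\<^sub>R b (\<theta> t x)) \<bullet> \<theta> t x)) (at t within {0..})"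
      by (rule has_derivative_inner[OF d1 d1])
    then have d2: "((\<lambda>s. \<theta> s x \<bullet> \<theta> s x) has_real_derivative 2 * (\<theta> t x \<bullet> b (\<theta> t x))) (at t within {0..})"
      unfolding has_field_derivative_def
      by (rule has_derivative_eq_rhs) (auto simp: fun_eq_iff inner_commute algebra_simps)
    show ?thesis unfolding v_def
      by (rule derivative_eq_intros d2 refl | simp)+
  qed
  have vle: "v 1 \<le> v 0"
  proof (rule DERIV_nonpos_imp_decreasing_open[of 0 1 v])
    fix t :: real assume t: "0 < t" "t < 1"
    have "at t within {0..} = at t"
    proof -
      have "at t within {0<..} = at t" using t by (intro at_within_open) auto
      moreover have "at t within {0<..} \<le> at t within {0..}" by (intro at_le) auto
      ultimately show ?thesis by (metis at_le antisym order_refl top_greatest at_within_def inf_top.right_neutral) 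
    qed
    moreover have "exp (2 * c2 * t) * (2 * c2) * (\<theta> t x \<bullet> \<theta> t x - c1 / c2)
            + exp (2 * c2 * t) * (2 * (\<theta> t x \<bullet> b (\<theta> t x))) \<le> 0"
    proof -
      have "\<theta> t x \<bullet> b (\<theta> t x) \<le> c1 - c2 * (\<theta> t x \<bullet> \<theta> t x)"
        using diss[of "\<theta> t x"] by (simp add: inner_commute power2_norm_eq_inner)
      moreover have "(2 * c2) * (\<theta> t x \<bullet> \<theta> t x - c1 / c2) = 2 * c2 * (\<theta> t x \<bullet> \<theta> t x) - 2 * c1"
        using c2 by (simp add: right_diff_distrib)
      ultimately have "(2 * c2) * (\<theta> t x \<bullet> \<theta> t x - c1 / c2) + 2 * (\<theta> t x \<bullet> b (\<theta> t x)) \<le> 0"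
        by linarith
      then have "exp (2 * c2 * t) * ((2 * c2) * (\<theta> t x \<bullet> \<theta> t x - c1 / c2) + 2 * (\<theta> t x \<bullet> b (\<theta> t x))) \<le> 0"
        by (simp add: mult_nonneg_nonpos)
      moreover have "\<And>A B C E :: real. A * B * C + A * E = A * (B * C + E)" by (simp add: algebra_simps)
      ultimately show ?thesis by metis
    qed
    ultimately show "\<exists>y. (v has_real_derivative y) (at t) \<and> y \<le> 0" using dv[of t] t by force
  next
    show "continuous_on {0..1} v"
    proof (rule continuous_on_subset[of "{0..}"])
      show "continuous_on {0..} v"
        unfolding continuous_on_eq_continuous_within
        using dv by (auto intro: DERIV_continuous)
    qed auto
  qed simp
  have "exp (2 * c2) * ((norm (\<theta> 1 x))\<^sup>2 - c1 / c2) \<le> (norm x)\<^sup>2 - c1 / c2"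
    using vle by (simp add: v_def th0 power2_norm_eq_inner)
  then have "(norm (\<theta> 1 x))\<^sup>2 - c1 / c2 \<le> exp (-2 * c2) * ((norm x)\<^sup>2 - c1 / c2)"
    by (simp add: exp_minus field_simps mult.commute)
  also have "\<dots> = exp (-2 * c2) * (norm x)\<^sup>2 - exp (-2 * c2) * (c1 / c2)" by (simp add: algebra_simps)
  finally have 1: "(norm (\<theta> 1 x))\<^sup>2 \<le> exp (-2 * c2) * (norm x)\<^sup>2 + (1 - exp (-2 * c2)) * (c1 / c2)"
    by (simp add: algebra_simps)
  have E: "0 \<le> 1 - exp (-2 * c2)" "1 - exp (-2 * c2) \<le> 1" using c2 by auto
  have "(1 - exp (-2 * c2)) * (c1 / c2) \<le> (1 - exp (-2 * c2)) * (\<bar>c1\<bar> / c2)"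
    using c2 E by (intro mult_left_mono divide_right_mono) auto
  also have "\<dots> \<le> 1 * (\<bar>c1\<bar> / c2)" using c2 E by (intro mult_right_mono) auto
  finally have "(1 - exp (-2 * c2)) * (c1 / c2) \<le> 1 * (\<bar>c1\<bar> / c2)" .
  then show ?thesis using 1 by simp
qed


lemma gauss_scale:
  fixes \<theta> :: "'a::euclidean_space" and l :: real
  assumes l: "l > 0"
  shows "(\<integral>\<^sup>+y. ennreal (exp (- (l / 2) * (norm (y - \<theta>))\<^sup>2)) \<partial>lborel)
       = ennreal ((sqrt 2 / l) ^ DIM('a)) * (\<integral>\<^sup>+w. ennreal (exp (- (norm (w - \<theta>))\<^sup>2 / l)) \<partial>lborel)"
proof -
  define c where "c = sqrt 2 / l"
  have c: "c > 0" using l by (simp add: c_def)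
  define t where "t = \<theta> - c *\<^sub>R \<theta>"
  have eq: "lborel = density (distr lborel borel (\<lambda>x. t + c *\<^sub>R x)) (\<lambda>_. ennreal (\<bar>c\<bar> ^ DIM('a)))"
    using lborel_affine[of c t] c by simp
  let ?f = "\<lambda>y::'a. ennreal (exp (- (l / 2) * (norm (y - \<theta>))\<^sup>2))"
  have "(\<integral>\<^sup>+y. ?f y \<partial>lborel) = (\<integral>\<^sup>+y. ?f y \<partial>(density (distr lborel borel (\<lambda>x. t + c *\<^sub>R x)) (\<lambda>_. ennreal (\<bar>c\<bar> ^ DIM('a)))))"
    by (simp only: eq[symmetric])
  also have "\<dots> = (\<integral>\<^sup>+w. ennreal (\<bar>c\<bar> ^ DIM('a)) * ?f (t + c *\<^sub>R w) \<partial>lborel)"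
    by (subst nn_integral_density) (auto simp: nn_integral_distr)
  also have "\<dots> = ennreal (c ^ DIM('a)) * (\<integral>\<^sup>+w. ennreal (exp (- (norm (w - \<theta>))\<^sup>2 / l)) \<partial>lborel)"
  proof -
    have "?f (t + c *\<^sub>R w) = ennreal (exp (- (norm (w - \<theta>))\<^sup>2 / l))" for w
    proof -
      have "t + c *\<^sub>R w - \<theta> = c *\<^sub>R (w - \<theta>)" by (simp add: t_def algebra_simps)
      then have "(norm (t + c *\<^sub>R w - \<theta>))\<^sup>2 = c\<^sup>2 * (norm (w - \<theta>))\<^sup>2" using c by (simp add: power_mult_distrib)
      moreover have "(l / 2) * c\<^sup>2 = 1 / l" using l by (simp add: c_def power_divide power2_eq_square)
      ultimately have "- (l / 2) * (norm (t + c *\<^sub>R w - \<theta>))\<^sup>2 = - (norm (w - \<theta>))\<^sup>2 / l"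
        by (metis (no_types, lifting) divide_inverse mult.assoc mult.left_neutral mult_minus_left mult.commute)
      then show ?thesis by simp
    qed
    then show ?thesis using c by (subst nn_integral_cmult) auto
  qed
  finally show ?thesis by (simp add: c_def)
qed

lemma scalar_exp_bound:
  fixes s l :: real assumes "s \<ge> 0" "l > 0"
  shows "s * exp (- l * s) \<le> (2 / l) * exp (- (l / 2) * s)"
proof -
  have "1 + (l / 2) * s \<le> exp ((l / 2) * s)" by (rule exp_ge_add_one_self)
  then have "(l / 2) * s \<le> exp ((l / 2) * s)" by linarith
  then have "s \<le> (2 / l) * exp ((l / 2) * s)" using assms by (simp add: field_simps)
  then have "s * exp (- (l / 2) * s) \<le> (2 / l) * exp ((l / 2) * s) * exp (- (l / 2) * s)"
    by (intro mult_right_mono) auto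
  also have "\<dots> = 2 / l" by (simp add: mult.assoc exp_add[symmetric])
  finally have 1: "s * exp (- (l / 2) * s) \<le> 2 / l" .
  have "s * exp (- l * s) = (s * exp (- (l / 2) * s)) * exp (- (l / 2) * s)"
    by (simp add: mult.assoc exp_add[symmetric])
  also have "\<dots> \<le> (2 / l) * exp (- (l / 2) * s)" using 1 by (intro mult_right_mono) auto
  finally show ?thesis .
qed

lemma young_norm:
  fixes y \<theta> :: "'a::euclidean_space" and e :: real assumes e: "e > 0"
  shows "(norm y)\<^sup>2 \<le> (1 + e) * (norm \<theta>)\<^sup>2 + (1 + 1 / e) * (norm (y - \<theta>))\<^sup>2"
proof -
  define p where "p = norm \<theta>"
  define q where "q = norm (y - \<theta>)"
  have "norm y \<le> p + q" unfolding p_def q_def using norm_triangle_ineq[of \<theta> "y - \<theta>"] by simp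
  then have "(norm y)\<^sup>2 \<le> (p + q)\<^sup>2" by (intro power_mono) auto
  also have "\<dots> \<le> (1 + e) * p\<^sup>2 + (1 + 1 / e) * q\<^sup>2"
  proof -
    have "0 \<le> (e * p - q)\<^sup>2 / e" using e by simp
    also have "(e * p - q)\<^sup>2 / e = e * p\<^sup>2 - 2 * p * q + q\<^sup>2 / e" using e
      by (simp add: power2_eq_square field_simps)
    finally have "2 * p * q \<le> e * p\<^sup>2 + q\<^sup>2 / e" by linarith
    then show ?thesis by (simp add: power2_eq_square algebra_simps)
  qed
  finally show ?thesis by (simp add: p_def q_def)
qed

lemma drift_bound:
  fixes \<kappa> :: "'a::euclidean_space \<Rightarrow> 'a \<Rightarrow> real" and \<Theta> :: "'a \<Rightarrow> 'a"
  assumes mass: "\<And>x. (\<integral>\<^sup>+y. ennreal (\<kappa> x y) \<partial>lborel) = 1"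
    and low: "\<And>x y. exp (- (norm (\<Theta> x - y))\<^sup>2 / l0) / C0 \<le> \<kappa> x y"
    and up: "\<And>x y. \<kappa> x y \<le> C0 * exp (- l0 * (norm (\<Theta> x - y))\<^sup>2)"
    and l0: "0 < l0" and C0: "1 \<le> C0"
    and thb: "\<And>x. (norm (\<Theta> x))\<^sup>2 \<le> a * (norm x)\<^sup>2 + bb" and a: "0 < a" "a < 1" and bb: "0 \<le> bb"
    and meas: "\<And>x. (\<lambda>y. \<kappa> x y) \<in> borel_measurable borel"
  shows "\<exists>\<gamma> Cd. 0 \<le> \<gamma> \<and> \<gamma> < 1 \<and> 0 \<le> Cd \<and>
     (\<forall>x. (\<integral>\<^sup>+y. ennreal (Vf y * \<kappa> x y) \<partial>lborel) \<le> ennreal (\<gamma> * Vf x + Cd))"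
proof -
  have kpos: "0 \<le> \<kappa> x y" for x y using low[of x y] C0 order_trans[OF _ low[of x y]] by (meson divide_nonneg_nonneg exp_ge_zero less_imp_le order.trans zero_less_one less_le_trans)
  define cc where "cc = (sqrt 2 / l0) ^ DIM('a)"
  have cc0: "cc \<ge> 0" using l0 by (simp add: cc_def)
  define M2 where "M2 = C0 * (2 / l0) * (cc * C0)"
  have M2: "M2 \<ge> 0" using C0 l0 cc0 by (simp add: M2_def)
  have G: "(\<integral>\<^sup>+w. ennreal (exp (- (norm (w - \<Theta> x))\<^sup>2 / l0)) \<partial>lborel) \<le> ennreal C0" for x
  proof -
    have "(\<integral>\<^sup>+w. ennreal (exp (- (norm (w - \<Theta> x))\<^sup>2 / l0)) \<partial>lborel) \<le> (\<integral>\<^sup>+w. ennreal C0 * ennreal (\<kappa> x w) \<partial>lborel)"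
    proof (intro nn_integral_mono)
      fix w
      have "exp (- (norm (w - \<Theta> x))\<^sup>2 / l0) \<le> C0 * \<kappa> x w"
        using low[of x w] C0 by (simp add: norm_minus_commute field_simps)
      then show "ennreal (exp (- (norm (w - \<Theta> x))\<^sup>2 / l0)) \<le> ennreal C0 * ennreal (\<kappa> x w)"
        using C0 kpos by (simp add: ennreal_mult[symmetric] ennreal_leI)
    qed
    also have "\<dots> = ennreal C0" using meas by (subst nn_integral_cmult) (auto simp: mass)
    finally show ?thesis .
  qed
  have Mb: "(\<integral>\<^sup>+y. ennreal ((norm (y - \<Theta> x))\<^sup>2 * \<kappa> x y) \<partial>lborel) \<le> ennreal M2" for x
  proof -
    have "(\<integral>\<^sup>+y. ennreal ((norm (y - \<Theta> x))\<^sup>2 * \<kappa> x y) \<partial>lborel)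
        \<le> (\<integral>\<^sup>+y. ennreal (C0 * (2 / l0)) * ennreal (exp (- (l0 / 2) * (norm (y - \<Theta> x))\<^sup>2)) \<partial>lborel)"
    proof (intro nn_integral_mono)
      fix y
      have "(norm (y - \<Theta> x))\<^sup>2 * \<kappa> x y \<le> (norm (y - \<Theta> x))\<^sup>2 * (C0 * exp (- l0 * (norm (y - \<Theta> x))\<^sup>2))"
        using up[of x y] by (intro mult_left_mono) (auto simp: norm_minus_commute)
      also have "\<dots> = C0 * ((norm (y - \<Theta> x))\<^sup>2 * exp (- l0 * (norm (y - \<Theta> x))\<^sup>2))" by simp
      also have "\<dots> \<le> C0 * ((2 / l0) * exp (- (l0 / 2) * (norm (y - \<Theta> x))\<^sup>2))"
        using C0 l0 by (intro mult_left_mono scalar_exp_bound) auto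
      finally show "ennreal ((norm (y - \<Theta> x))\<^sup>2 * \<kappa> x y) \<le> ennreal (C0 * (2 / l0)) * ennreal (exp (- (l0 / 2) * (norm (y - \<Theta> x))\<^sup>2))"
        using C0 l0 by (simp add: ennreal_mult[symmetric] ennreal_leI mult.assoc)
    qed
    also have "\<dots> = ennreal (C0 * (2 / l0)) * (\<integral>\<^sup>+y. ennreal (exp (- (l0 / 2) * (norm (y - \<Theta> x))\<^sup>2)) \<partial>lborel)"
      by (subst nn_integral_cmult) auto
    also have "\<dots> = ennreal (C0 * (2 / l0)) * (ennreal cc * (\<integral>\<^sup>+w. ennreal (exp (- (norm (w - \<Theta> x))\<^sup>2 / l0)) \<partial>lborel))"
      using gauss_scale[OF l0, of "\<Theta> x"] by (simp add: cc_def)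
    also have "\<dots> \<le> ennreal (C0 * (2 / l0)) * (ennreal cc * ennreal C0)"
      by (intro mult_left_mono G) auto
    also have "\<dots> = ennreal M2" using C0 l0 cc0 by (simp add: M2_def ennreal_mult[symmetric] mult.assoc)
    finally show ?thesis .
  qed
  define e where "e = (1 - a) / (2 * a)"
  have e0: "e > 0" using a by (simp add: e_def)
  define \<gamma> where "\<gamma> = (1 + a) / 2"
  have ga: "(1 + e) * a = \<gamma>" using a by (simp add: e_def \<gamma>_def field_simps)
  define Cd where "Cd = 1 + (1 + e) * bb + (1 + 1 / e) * M2"
  show ?thesis
  proof (rule exI[of _ \<gamma>], rule exI[of _ Cd], intro conjI allI)
    show "0 \<le> \<gamma>" "\<gamma> < 1" using a by (auto simp: \<gamma>_def)
    show "0 \<le> Cd" using e0 bb M2 by (simp add: Cd_def)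
    fix x
    define th where "th = \<Theta> x"
    have "(\<integral>\<^sup>+y. ennreal (Vf y * \<kappa> x y) \<partial>lborel)
        \<le> (\<integral>\<^sup>+y. ennreal (1 + (1 + e) * (norm th)\<^sup>2) * ennreal (\<kappa> x y)
              + ennreal (1 + 1 / e) * ennreal ((norm (y - th))\<^sup>2 * \<kappa> x y) \<partial>lborel)"
    proof (intro nn_integral_mono)
      fix y
      have "Vf y * \<kappa> x y \<le> (1 + (1 + e) * (norm th)\<^sup>2 + (1 + 1 / e) * (norm (y - th))\<^sup>2) * \<kappa> x y"
        using young_norm[OF e0, of y th] kpos[of x y] by (intro mult_right_mono) (auto simp: Vf_def)
      also have "\<dots> = (1 + (1 + e) * (norm th)\<^sup>2) * \<kappa> x y + (1 + 1 / e) * ((norm (y - th))\<^sup>2 * \<kappa> x y)"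
        by (simp add: algebra_simps)
      finally show "ennreal (Vf y * \<kappa> x y) \<le> ennreal (1 + (1 + e) * (norm th)\<^sup>2) * ennreal (\<kappa> x y)
              + ennreal (1 + 1 / e) * ennreal ((norm (y - th))\<^sup>2 * \<kappa> x y)"
        using e0 kpos[of x y] by (simp add: ennreal_mult[symmetric] ennreal_plus[symmetric] ennreal_leI del: ennreal_plus)
    qed
    also have "\<dots> = ennreal (1 + (1 + e) * (norm th)\<^sup>2) * (\<integral>\<^sup>+y. ennreal (\<kappa> x y) \<partial>lborel)
          + ennreal (1 + 1 / e) * (\<integral>\<^sup>+y. ennreal ((norm (y - th))\<^sup>2 * \<kappa> x y) \<partial>lborel)"
      using meas[of x] by (subst nn_integral_add) (auto simp: nn_integral_cmult)
    also have "\<dots> \<le> ennreal (1 + (1 + e) * (norm th)\<^sup>2) * 1 + ennreal (1 + 1 / e) * ennreal M2"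
      unfolding mass th_def by (intro add_mono mult_left_mono Mb) auto
    also have "\<dots> = ennreal (1 + (1 + e) * (norm th)\<^sup>2 + (1 + 1 / e) * M2)"
      using e0 M2 by (simp add: ennreal_mult[symmetric] ennreal_plus[symmetric] del: ennreal_plus)
    also have "\<dots> \<le> ennreal (\<gamma> * Vf x + Cd)"
    proof (intro ennreal_leI)
      have "(1 + e) * (norm th)\<^sup>2 \<le> (1 + e) * (a * (norm x)\<^sup>2 + bb)"
        using thb[of x] e0 by (intro mult_left_mono) (auto simp: th_def)
      also have "\<dots> = ((1 + e) * a) * (norm x)\<^sup>2 + (1 + e) * bb" by (simp add: algebra_simps)
      also have "\<dots> = \<gamma> * (norm x)\<^sup>2 + (1 + e) * bb" by (simp only: ga)
      finally have "(1 + e) * (norm th)\<^sup>2 \<le> \<gamma> * (norm x)\<^sup>2 + (1 + e) * bb" .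
      moreover have "0 \<le> \<gamma>" using a by (simp add: \<gamma>_def)
      ultimately show "1 + (1 + e) * (norm th)\<^sup>2 + (1 + 1 / e) * M2 \<le> \<gamma> * Vf x + Cd"
        by (simp add: Vf_def Cd_def algebra_simps)
    qed
    finally show "(\<integral>\<^sup>+y. ennreal (Vf y * \<kappa> x y) \<partial>lborel) \<le> ennreal (\<gamma> * Vf x + Cd)" .
  qed
qed


context kern begin

lemma main_kern:
  assumes VD: "\<And>y. y \<in> D \<Longrightarrow> Vf y \<le> VD"
  shows "\<exists>A B \<epsilon>0 lam. A > 0 \<and> B > 0 \<and> \<epsilon>0 > 0 \<and> 0 \<le> lam \<and> lam < 1 \<and>
   (\<forall>p \<epsilon>. kmeas p \<and> (\<forall>x y. x \<notin> D \<or> y \<notin> D \<longrightarrow> p x y = 0)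
      \<and> (\<integral>\<^sup>+z. ennreal ((p (fst z) (snd z))\<^sup>2) \<partial>(lborel \<Otimes>\<^sub>M lborel)) \<le> ennreal (\<epsilon>\<^sup>2)
      \<and> 0 \<le> \<epsilon> \<and> \<epsilon> \<le> \<epsilon>0
      \<and> (\<forall>g. integrable lborel g \<longrightarrow> integrable lborel (transfer_op (\<lambda>x y. \<kappa> x y + p x y) g) \<longrightarrow>
            (\<integral>y. transfer_op (\<lambda>x y. \<kappa> x y + p x y) g y \<partial>lborel) = (\<integral>x. g x \<partial>lborel))
      \<longrightarrow> (\<forall>n f. in_B D f \<longrightarrow> in_B D ((transfer_op (\<lambda>x y. \<kappa> x y + p x y) ^^ n) f) \<and>
            s_norm D ((transfer_op (\<lambda>x y. \<kappa> x y + p x y) ^^ n) f) \<le> A * lam ^ n * s_norm D f + B * L1_norm f))"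
proof -
  define R where "R = 4 * (Cd + 1) / (1 - \<gamma>)"
  have R0: "R > 0" using Cd gam by (simp add: R_def)
  obtain e where e: "e > 0" and H0: "\<forall>g. in_B D g \<and> (\<integral>x. g x \<partial>lborel) = 0 \<longrightarrow>
     L1_norm (transfer_op \<kappa> g) \<le> (1 - e) * L1_norm g + 2 * e / R * L1w_norm 2 g"
    using harris[OF R0] by blast
  define sD where "sD = sqrt (measure lborel D)"
  have sD: "sD > 0" using Dpos by (simp add: sD_def)
  have VD1: "1 \<le> VD" using Vf_ge1 VD Dpos by (metis emeasure_empty equals0I measure_empty order_trans less_irrefl)
  define \<beta> where "\<beta> = 3 * e / (4 * (Cd + 1))"
  define \<tau> where "\<tau> = e / (8 * (C0 + 1) * sqrt (measure lborel D))"
  define \<alpha> where "\<alpha> = max (1 - e / 8) (max ((2 + \<gamma>) / 3) (1 / 2))"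
  have b0: "\<beta> > 0" using e Cd by (simp add: \<beta>_def)
  have t0: "\<tau> > 0" using e C0_nonneg Dpos by (simp add: \<tau>_def)
  define X where "X = sD + \<beta> * (VD * sD) + \<tau>"
  have X0: "X > 0" using sD b0 t0 VD1 by (simp add: X_def add_pos_nonneg)
  define \<epsilon>0 where "\<epsilon>0 = min 1 (\<tau> / (2 * X))"
  have e00: "\<epsilon>0 > 0" using t0 X0 by (simp add: \<epsilon>0_def)
  define K1' where "K1' = \<gamma> + Cd + VD * sD + C0 * sD + 1"
  define cs' where "cs' = 1 / \<beta> + 1 / \<tau>"
  define cN' where "cN' = 1 + \<beta> + \<tau>"
  define Phi' where "Phi' = s_norm D phiD + cs' * cN' * (K1' + 1) * s_norm D phiD / (1 - \<alpha>)"
  define A where "A = cs' * cN'"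
  define B where "B = cs' * cN' * s_norm D phiD + Phi' + 1"
  have a0: "0 \<le> \<alpha>" unfolding \<alpha>_def by (simp add: le_max_iff_disj)
  have a1: "\<alpha> < 1" unfolding \<alpha>_def using e gam by auto
  have cs0: "cs' > 0" unfolding cs'_def using b0 t0 by (intro add_pos_pos divide_pos_pos) auto
  have cN0: "cN' > 0" unfolding cN'_def using b0 t0 by simp
  have K10: "K1' \<ge> 0" unfolding K1'_def using gam Cd VD1 sD C0_nonneg by (simp add: add_nonneg_nonneg)
  have A0: "A > 0" using cs0 cN0 by (simp add: A_def)
  have Phi0: "Phi' \<ge> 0" unfolding Phi'_def using cs0 cN0 K10 a1 s_nonneg[of D phiD]
    by (intro add_nonneg_nonneg divide_nonneg_nonneg mult_nonneg_nonneg) auto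
  have B0: "B > 0" unfolding B_def using cs0 cN0 Phi0 s_nonneg[of D phiD]
    by (simp add: add_pos_nonneg add_nonneg_pos)
  show ?thesis
  proof (rule exI[of _ A], rule exI[of _ B], rule exI[of _ \<epsilon>0], rule exI[of _ \<alpha>], intro conjI allI impI A0 B0 e00 a0 a1)
    fix p \<epsilon> n f
    assume hyp: "kmeas p \<and> (\<forall>x y. x \<notin> D \<or> y \<notin> D \<longrightarrow> p x y = 0)
      \<and> (\<integral>\<^sup>+z. ennreal ((p (fst z) (snd z))\<^sup>2) \<partial>(lborel \<Otimes>\<^sub>M lborel)) \<le> ennreal (\<epsilon>\<^sup>2)
      \<and> 0 \<le> \<epsilon> \<and> \<epsilon> \<le> \<epsilon>0
      \<and> (\<forall>g. integrable lborel g \<longrightarrow> integrable lborel (transfer_op (\<lambda>x y. \<kappa> x y + p x y) g) \<longrightarrow>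
            (\<integral>y. transfer_op (\<lambda>x y. \<kappa> x y + p x y) g y \<partial>lborel) = (\<integral>x. g x \<partial>lborel))"
    assume f: "in_B D f"
    have epsle: "\<epsilon> * (sqrt (measure lborel D) + \<beta> * (VD * sqrt (measure lborel D)) + \<tau>) \<le> \<tau> / 2"
    proof -
      have "\<epsilon> * X \<le> (\<tau> / (2 * X)) * X" using hyp X0 by (intro mult_right_mono) (auto simp: \<epsilon>0_def)
      also have "\<dots> = \<tau> / 2" using X0 by simp
      finally show ?thesis by (simp add: X_def sD_def)
    qed
    interpret c: cpert \<kappa> D C0 \<gamma> Cd p \<epsilon> VD e \<beta> \<tau> \<alpha>
    proof (unfold_locales)
      show "kmeas p" using hyp by blast
      show "\<And>x y. x \<notin> D \<or> y \<notin> D \<Longrightarrow> p x y = 0" using hyp by blast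
      show "(\<integral>\<^sup>+z. ennreal ((p (fst z) (snd z))\<^sup>2) \<partial>(lborel \<Otimes>\<^sub>M lborel)) \<le> ennreal (\<epsilon>\<^sup>2)" using hyp by blast
      show "0 \<le> \<epsilon>" using hyp by blast
      show "\<And>y. y \<in> D \<Longrightarrow> Vf y \<le> VD" by (rule VD)
      show "\<And>g. integrable lborel g \<Longrightarrow> integrable lborel (transfer_op (\<lambda>x y. \<kappa> x y + p x y) g) \<Longrightarrow>
            (\<integral>y. transfer_op (\<lambda>x y. \<kappa> x y + p x y) g y \<partial>lborel) = (\<integral>x. g x \<partial>lborel)" using hyp by blast
      show "e > 0" by (rule e)
      show "\<And>g. in_B D g \<Longrightarrow> (\<integral>x. g x \<partial>lborel) = 0 \<Longrightarrow>
      L1_norm (transfer_op \<kappa> g) \<le> (1 - e) * L1_norm g + 2 * e / (4 * (Cd + 1) / (1 - \<gamma>)) * L1w_norm 2 g"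
        using H0 by (simp add: R_def)
      show "\<beta> = 3 * e / (4 * (Cd + 1))" by (rule \<beta>_def)
      show "\<tau> = e / (8 * (C0 + 1) * sqrt (measure lborel D))" by (rule \<tau>_def)
      show "\<epsilon> * (sqrt (measure lborel D) + \<beta> * (VD * sqrt (measure lborel D)) + \<tau>) \<le> \<tau> / 2" by (rule epsle)
      show "\<alpha> = max (1 - e / 8) (max ((2 + \<gamma>) / 3) (1 / 2))" by (rule \<alpha>_def)
      show "\<epsilon> \<le> 1" using hyp by (auto simp: \<epsilon>0_def)
    qed
    have AA: "c.Aconst = A" by (simp add: c.Aconst_def c.cs_def c.cN_def A_def cs'_def cN'_def)
    have BB: "c.Bconst = B" by (simp add: c.Bconst_def c.cs_def c.cN_def c.Phi_def c.K1_def B_def cs'_def cN'_def Phi'_def K1'_def sD_def)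
    show "in_B D ((transfer_op (\<lambda>x y. \<kappa> x y + p x y) ^^ n) f)" using c.final(1)[OF f] .
    show "s_norm D ((transfer_op (\<lambda>x y. \<kappa> x y + p x y) ^^ n) f) \<le> A * \<alpha> ^ n * s_norm D f + B * L1_norm f"
      using c.final(2)[OF f, of n] AA BB by simp
  qed
qed

end

lemma kern_inst:
  fixes b :: "'a::euclidean_space \<Rightarrow> 'a"
    and M :: "'p measure" and W :: "real \<Rightarrow> 'p \<Rightarrow> 'a"
    and X :: "'a \<Rightarrow> real \<Rightarrow> 'p \<Rightarrow> 'a"
    and \<theta> :: "real \<Rightarrow> 'a \<Rightarrow> 'a"
    and \<kappa> :: "'a \<Rightarrow> 'a \<Rightarrow> real"
    and D :: "'a set"
  assumes diss: "\<exists>c1 c2. c2 > 0 \<and> (\<forall>x. inner (b x) x \<le> c1 - c2 * (norm x)\<^sup>2)"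
    and BM: "std_BM M W"
    and flow: "is_flow b \<theta>"
    and dens: "\<forall>x. distributed M lborel (X x 1) (\<lambda>y. ennreal (\<kappa> x y))"
    and kcont: "continuous_on UNIV (\<lambda>z. \<kappa> (fst z) (snd z))"
    and kb: "\<exists>l0 C0. 0 < l0 \<and> l0 \<le> 1 \<and> C0 \<ge> 1 \<and>
        (\<forall>x y. exp (- (norm (\<theta> 1 x - y))\<^sup>2 / l0) / C0 \<le> \<kappa> x y
             \<and> \<kappa> x y \<le> C0 * exp (- l0 * (norm (\<theta> 1 x - y))\<^sup>2))"
    and D: "compact D" "0 \<in> interior D"
  shows "\<exists>C0 \<gamma> Cd VD. kern \<kappa> D C0 \<gamma> Cd \<and> (\<forall>y\<in>D. Vf y \<le> VD)"
proof -
  obtain c1 c2 where c2: "c2 > 0" and dis: "\<And>x. inner (b x) x \<le> c1 - c2 * (norm x)\<^sup>2" using diss by blast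
  obtain l0 C0 where l0: "0 < l0" "l0 \<le> 1" and C0: "C0 \<ge> 1"
    and low: "\<And>x y. exp (- (norm (\<theta> 1 x - y))\<^sup>2 / l0) / C0 \<le> \<kappa> x y"
    and up: "\<And>x y. \<kappa> x y \<le> C0 * exp (- l0 * (norm (\<theta> 1 x - y))\<^sup>2)"
    using kb by blast
  have ps: "prob_space M" using BM by (simp add: std_BM_def)
  have km: "kmeas \<kappa>"
  proof -
    have "(\<lambda>z. \<kappa> (fst z) (snd z)) \<in> borel_measurable borel" by (rule borel_measurable_continuous_onI[OF kcont])
    then have "(\<lambda>z. \<kappa> (fst z) (snd z)) \<in> borel_measurable (borel \<Otimes>\<^sub>M borel)" by (simp add: borel_prod)
    moreover have "sets (lborel \<Otimes>\<^sub>M lborel) = sets (borel \<Otimes>\<^sub>M (borel :: 'a measure))"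
      by (rule sets_pair_measure_cong) auto
    moreover have "borel_measurable (lborel \<Otimes>\<^sub>M lborel) = borel_measurable (borel \<Otimes>\<^sub>M (borel :: 'a measure))"
      by (rule measurable_cong_sets) (use calculation in auto)
    ultimately show ?thesis unfolding kmeas_def by simp
  qed
  have ksec: "(\<lambda>y. \<kappa> x y) \<in> borel_measurable borel" for x using kmeas_sect2[OF km] .
  have kpos: "0 \<le> \<kappa> x y" for x y
  proof -
    have "0 \<le> exp (- (norm (\<theta> 1 x - y))\<^sup>2 / l0) / C0" using C0 by simp
    then show ?thesis using low[of x y] by linarith
  qed
  have kbd: "\<kappa> x y \<le> C0" for x y
  proof -
    have "C0 * exp (- l0 * (norm (\<theta> 1 x - y))\<^sup>2) \<le> C0 * 1" using C0 l0 by (intro mult_left_mono) auto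
    then show ?thesis using up[of x y] by simp
  qed
  have kmass: "(\<integral>\<^sup>+y. ennreal (\<kappa> x y) \<partial>lborel) = 1" for x
  proof -
    have dx: "distributed M lborel (X x 1) (\<lambda>y. ennreal (\<kappa> x y))" using dens by blast
    have "emeasure M (X x 1 -` UNIV \<inter> space M) = (\<integral>\<^sup>+y. ennreal (\<kappa> x y) * indicator UNIV y \<partial>lborel)"
      by (rule distributed_emeasure[OF dx]) simp
    moreover have "emeasure M (X x 1 -` UNIV \<inter> space M) = 1" using prob_space.emeasure_space_1[OF ps] by simp
    ultimately show ?thesis by simp
  qed
  have thb: "(norm (\<theta> 1 x))\<^sup>2 \<le> exp (-2 * c2) * (norm x)\<^sup>2 + \<bar>c1\<bar> / c2" for x
    by (rule flow_bound[OF flow c2 dis])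
  have ex: "\<exists>\<gamma> Cd. 0 \<le> \<gamma> \<and> \<gamma> < 1 \<and> 0 \<le> Cd \<and>
     (\<forall>x. (\<integral>\<^sup>+y. ennreal (Vf y * \<kappa> x y) \<partial>lborel) \<le> ennreal (\<gamma> * Vf x + Cd))"
  proof (rule drift_bound[of \<kappa> "\<theta> 1" l0 C0 "exp (-2 * c2)" "\<bar>c1\<bar> / c2", OF kmass low up l0(1) C0 thb])
    show "0 < exp (-2 * c2)" by simp
    show "exp (-2 * c2) < 1" using c2 by simp
    show "0 \<le> \<bar>c1\<bar> / c2" using c2 by simp
    show "\<And>x. (\<lambda>y. \<kappa> x y) \<in> borel_measurable borel" by (rule ksec)
  qed
  then obtain \<gamma> Cd where gam: "0 \<le> \<gamma>" "\<gamma> < 1" and Cd: "0 \<le> Cd"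
    and drift: "\<And>x. (\<integral>\<^sup>+y. ennreal (Vf y * \<kappa> x y) \<partial>lborel) \<le> ennreal (\<gamma> * Vf x + Cd)"
    by blast
  obtain Bd where Bd: "\<And>y. y \<in> D \<Longrightarrow> norm y \<le> Bd" and Bd0: "0 \<le> Bd"
  proof -
    obtain B0 where "\<forall>y\<in>D. norm y \<le> B0" using compact_imp_bounded[OF D(1)] bounded_iff by blast
    then have "\<And>y. y \<in> D \<Longrightarrow> norm y \<le> max B0 0" by (meson max.coboundedI1)
    then show ?thesis using that[of "max B0 0"] by simp
  qed
  have minor: "\<exists>\<eta>>0. \<forall>x y. Vf x \<le> R \<longrightarrow> y \<in> D \<longrightarrow> \<eta> \<le> \<kappa> x y" for R
  proof -
    define Rad where "Rad = sqrt (\<bar>R\<bar> + \<bar>c1\<bar> / c2) + Bd"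
    have Rad0: "Rad \<ge> 0" using Bd0 c2 by (simp add: Rad_def)
    define \<eta> where "\<eta> = exp (- Rad\<^sup>2 / l0) / C0"
    have "\<eta> > 0" using C0 by (simp add: \<eta>_def)
    moreover have "\<eta> \<le> \<kappa> x y" if x: "Vf x \<le> R" and y: "y \<in> D" for x y
    proof -
      have "(norm (\<theta> 1 x))\<^sup>2 \<le> \<bar>R\<bar> + \<bar>c1\<bar> / c2"
      proof -
        have "exp (-2 * c2) * (norm x)\<^sup>2 \<le> 1 * (norm x)\<^sup>2" using c2 by (intro mult_right_mono) auto
        moreover have "(norm x)\<^sup>2 \<le> \<bar>R\<bar>" using x by (simp add: Vf_def)
        ultimately show ?thesis using thb[of x] by linarith
      qed
      then have "norm (\<theta> 1 x) \<le> sqrt (\<bar>R\<bar> + \<bar>c1\<bar> / c2)" by (simp add: real_le_rsqrt)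
      then have "norm (\<theta> 1 x - y) \<le> Rad"
        using norm_triangle_ineq4[of "\<theta> 1 x" y] Bd[OF y] by (simp add: Rad_def)
      then have "(norm (\<theta> 1 x - y))\<^sup>2 \<le> Rad\<^sup>2" by (intro power_mono) auto
      then have "exp (- Rad\<^sup>2 / l0) \<le> exp (- (norm (\<theta> 1 x - y))\<^sup>2 / l0)" using l0 by (simp add: divide_right_mono)
      then have "\<eta> \<le> exp (- (norm (\<theta> 1 x - y))\<^sup>2 / l0) / C0" using C0 by (simp add: \<eta>_def divide_right_mono)
      then show ?thesis using low[of x y] by linarith
    qed
    ultimately show ?thesis by blast
  qed
  have Dpos: "0 < measure lborel D"
  proof -
    obtain e where e: "e > 0" "ball 0 e \<subseteq> D" using D(2) mem_interior by blast
    have Dm: "D \<in> sets lborel" using D(1) by (simp add: borel_compact)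
    have "0 < emeasure lborel (ball (0::'a) e)" using e by (simp add: emeasure_ball unit_ball_vol_pos)
    also have "\<dots> \<le> emeasure lborel D" using e Dm by (intro emeasure_mono) auto
    also have "\<dots> = ennreal (measure lborel D)" using emeasure_compact_finite[OF D(1)] by (simp add: emeasure_eq_ennreal_measure)
    finally show ?thesis by simp
  qed
  have "kern \<kappa> D C0 \<gamma> Cd"
  proof (unfold_locales)
    show "kmeas \<kappa>" by (rule km)
    show "\<And>x y. 0 \<le> \<kappa> x y" by (rule kpos)
    show "\<And>x y. \<kappa> x y \<le> C0" by (rule kbd)
    show "\<And>x. (\<integral>\<^sup>+y. ennreal (\<kappa> x y) \<partial>lborel) = 1" by (rule kmass)
    show "\<And>x. (\<integral>\<^sup>+y. ennreal (Vf y * \<kappa> x y) \<partial>lborel) \<le> ennreal (\<gamma> * Vf x + Cd)" by (rule drift)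
    show "0 \<le> \<gamma>" "\<gamma> < 1" "0 \<le> Cd" by (rule gam(1), rule gam(2), rule Cd)
    show "\<And>R. \<exists>\<eta>>0. \<forall>x y. Vf x \<le> R \<longrightarrow> y \<in> D \<longrightarrow> \<eta> \<le> \<kappa> x y" by (rule minor)
    show "compact D" by (rule D(1))
    show "0 < measure lborel D" by (rule Dpos)
  qed
  moreover have "\<forall>y\<in>D. Vf y \<le> 1 + Bd\<^sup>2"
  proof
    fix y assume "y \<in> D"
    then have "(norm y)\<^sup>2 \<le> Bd\<^sup>2" using Bd by (intro power_mono) auto
    then show "Vf y \<le> 1 + Bd\<^sup>2" by (simp add: Vf_def)
  qed
  ultimately show ?thesis by blast
qed


theorem lemma4p4:
  fixes b :: "'a::euclidean_space \<Rightarrow> 'a"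
    and M :: "'p measure" and W :: "real \<Rightarrow> 'p \<Rightarrow> 'a"
    and X :: "'a \<Rightarrow> real \<Rightarrow> 'p \<Rightarrow> 'a"
    and \<theta> :: "real \<Rightarrow> 'a \<Rightarrow> 'a"
    and \<kappa> \<kappa>' :: "'a \<Rightarrow> 'a \<Rightarrow> real"
    and r :: "real \<Rightarrow> 'a \<Rightarrow> 'a \<Rightarrow> real"
    and D :: "'a set" and \<delta>bar :: real
  assumes lip: "\<forall>x0. \<exists>K>0. \<exists>\<delta>0>0. \<forall>x. norm (x0 - x) < \<delta>0 \<longrightarrow> norm (b x0 - b x) \<le> K * norm (x0 - x)"
    and diss: "\<exists>c1 c2. c2 > 0 \<and> (\<forall>x. inner (b x) x \<le> c1 - c2 * (norm x)\<^sup>2)"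
    and BM: "std_BM M W"
    and sde: "\<forall>x. solves_SDE M b W x (X x)"
    and flow: "is_flow b \<theta>"
    and dens: "\<forall>x. distributed M lborel (X x 1) (\<lambda>y. ennreal (\<kappa> x y))"
    and kcont: "continuous_on UNIV (\<lambda>z. \<kappa> (fst z) (snd z))"
    and kbounds: "\<exists>l0 l1 C0 C1. 0 < l0 \<and> l0 \<le> 1 \<and> 0 < l1 \<and> l1 \<le> 1 \<and> C0 \<ge> 1 \<and> C1 \<ge> 1 \<and>
        (\<forall>x y. exp (- (norm (\<theta> 1 x - y))\<^sup>2 / l0) / C0 \<le> \<kappa> x y
             \<and> \<kappa> x y \<le> C0 * exp (- l0 * (norm (\<theta> 1 x - y))\<^sup>2)) \<and>
        (\<forall>x y. \<exists>g. ((\<lambda>x'. \<kappa> x' y) has_derivative (\<lambda>h. inner g h)) (at x)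
             \<and> norm g \<le> C1 * exp (- l1 * (norm (\<theta> 1 x - y))\<^sup>2)) \<and>
        (\<forall>x y. \<exists>g. ((\<lambda>y'. \<kappa> x y') has_derivative (\<lambda>h. inner g h)) (at y)
             \<and> norm g \<le> C1 * exp (- l1 * (norm (\<theta> 1 x - y))\<^sup>2))"
    and D: "compact D" "0 \<in> interior D"
    and dbar: "\<delta>bar > 0"
    and kdot_meas: "(\<lambda>z. \<kappa>' (fst z) (snd z)) \<in> borel_measurable (lborel \<Otimes>\<^sub>M lborel)"
    and kdot_supp: "\<forall>x y. (x, y) \<notin> D \<times> D \<longrightarrow> \<kappa>' x y = 0"
    and kdot_L2: "integrable (lborel \<Otimes>\<^sub>M lborel) (\<lambda>z. (\<kappa>' (fst z) (snd z))\<^sup>2)"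
    and r_meas: "\<forall>\<delta>\<in>{0..<\<delta>bar}. (\<lambda>z. r \<delta> (fst z) (snd z)) \<in> borel_measurable (lborel \<Otimes>\<^sub>M lborel)"
    and r_supp: "\<forall>\<delta>\<in>{0..<\<delta>bar}. \<forall>x y. (x, y) \<notin> D \<times> D \<longrightarrow> r \<delta> x y = 0"
    and r_L2: "\<forall>\<delta>\<in>{0..<\<delta>bar}. integrable (lborel \<Otimes>\<^sub>M lborel) (\<lambda>z. (r \<delta> (fst z) (snd z))\<^sup>2)"
    and r0: "\<forall>x y. r 0 x y = 0"
    and r_small: "((\<lambda>\<delta>. kernel_L2_norm (r \<delta>) / \<delta>) \<longlongrightarrow> 0) (at_right 0)"
    and int_pres: "\<forall>\<delta>\<in>{0..<\<delta>bar}. \<forall>g. integrable lborel g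
        \<and> integrable lborel (transfer_op (\<lambda>x y. \<kappa> x y + \<delta> * \<kappa>' x y + r \<delta> x y) g)
        \<longrightarrow> (\<integral>y. transfer_op (\<lambda>x y. \<kappa> x y + \<delta> * \<kappa>' x y + r \<delta> x y) g y \<partial>lborel)
            = (\<integral>x. g x \<partial>lborel)"
  shows "\<exists>A B \<delta>1 lam. A > 0 \<and> B > 0 \<and> \<delta>1 > 0 \<and> \<delta>1 \<le> \<delta>bar \<and> 0 \<le> lam \<and> lam < 1 \<and>
     (\<forall>\<delta>\<in>{0..<\<delta>1}. \<forall>n. \<forall>f. in_B D f \<longrightarrow>
        (let L = transfer_op (\<lambda>x y. \<kappa> x y + \<delta> * \<kappa>' x y + r \<delta> x y) in
          in_B D ((L ^^ n) f) \<and>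
          s_norm D ((L ^^ n) f) \<le> A * lam ^ n * s_norm D f + B * L1_norm f))"
proof -
  have kb: "\<exists>l0 C0. 0 < l0 \<and> l0 \<le> 1 \<and> C0 \<ge> 1 \<and>
        (\<forall>x y. exp (- (norm (\<theta> 1 x - y))\<^sup>2 / l0) / C0 \<le> \<kappa> x y
             \<and> \<kappa> x y \<le> C0 * exp (- l0 * (norm (\<theta> 1 x - y))\<^sup>2))"
    using kbounds by blast
  obtain C0 \<gamma> Cd VD where kr: "kern \<kappa> D C0 \<gamma> Cd" and VD: "\<forall>y\<in>D. Vf y \<le> VD"
    using kern_inst[where b=b and M=M and W=W and X=X and \<theta>=\<theta> and \<kappa>=\<kappa> and D=D, OF diss BM flow dens kcont kb D] by blast
  interpret k: kern \<kappa> D C0 \<gamma> Cd by (rule kr)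
  obtain A B \<epsilon>0 lam where AB: "A > 0" "B > 0" "\<epsilon>0 > 0" "0 \<le> lam" "lam < 1"
    and PP: "\<And>p \<epsilon>. kmeas p \<and> (\<forall>x y. x \<notin> D \<or> y \<notin> D \<longrightarrow> p x y = 0)
      \<and> (\<integral>\<^sup>+z. ennreal ((p (fst z) (snd z))\<^sup>2) \<partial>(lborel \<Otimes>\<^sub>M lborel)) \<le> ennreal (\<epsilon>\<^sup>2)
      \<and> 0 \<le> \<epsilon> \<and> \<epsilon> \<le> \<epsilon>0
      \<and> (\<forall>g. integrable lborel g \<longrightarrow> integrable lborel (transfer_op (\<lambda>x y. \<kappa> x y + p x y) g) \<longrightarrow>
            (\<integral>y. transfer_op (\<lambda>x y. \<kappa> x y + p x y) g y \<partial>lborel) = (\<integral>x. g x \<partial>lborel))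
      \<Longrightarrow> (\<forall>n f. in_B D f \<longrightarrow> in_B D ((transfer_op (\<lambda>x y. \<kappa> x y + p x y) ^^ n) f) \<and>
            s_norm D ((transfer_op (\<lambda>x y. \<kappa> x y + p x y) ^^ n) f) \<le> A * lam ^ n * s_norm D f + B * L1_norm f)"
    using k.main_kern[of VD] VD by blast
  define Kd where "Kd = (\<integral>z. (\<kappa>' (fst z) (snd z))\<^sup>2 \<partial>(lborel \<Otimes>\<^sub>M lborel))"
  have Kd0: "Kd \<ge> 0" unfolding Kd_def by simp
  have "eventually (\<lambda>\<delta>. kernel_L2_norm (r \<delta>) / \<delta> < 1) (at_right 0)"
    by (rule order_tendstoD(2)[OF r_small]) simp
  then obtain d0 where d0: "d0 > 0" and d0r: "\<And>\<delta>. 0 < \<delta> \<Longrightarrow> \<delta> < d0 \<Longrightarrow> kernel_L2_norm (r \<delta>) / \<delta> < 1"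
    unfolding eventually_at_right_field by auto
  define sq where "sq = sqrt (2 * (Kd + 1))"
  have sq0: "sq > 0" using Kd0 by (simp add: sq_def)
  define \<delta>1 where "\<delta>1 = min \<delta>bar (min d0 (\<epsilon>0 / sq))"
  have d10: "\<delta>1 > 0" using dbar d0 AB sq0 by (simp add: \<delta>1_def)
  show ?thesis
  proof (rule exI[of _ A], rule exI[of _ B], rule exI[of _ \<delta>1], rule exI[of _ lam], intro conjI ballI allI impI AB d10)
    show "\<delta>1 \<le> \<delta>bar" by (simp add: \<delta>1_def)
    fix \<delta> n f assume \<delta>: "\<delta> \<in> {0..<\<delta>1}" and f: "in_B D f"
    have \<delta>b: "\<delta> \<in> {0..<\<delta>bar}" using \<delta> by (auto simp: \<delta>1_def)
    define p where "p x y = \<delta> * \<kappa>' x y + r \<delta> x y" for x y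
    define rn where "rn = kernel_L2_norm (r \<delta>)"
    have rn0: "rn \<ge> 0" by (simp add: rn_def kernel_L2_norm_def)
    have rnd: "rn \<le> \<delta>"
    proof (cases "\<delta> = 0")
      case True then show ?thesis using r0 by (simp add: rn_def kernel_L2_norm_def)
    next
      case False
      then have "0 < \<delta>" "\<delta> < d0" using \<delta> by (auto simp: \<delta>1_def)
      then show ?thesis using d0r[of \<delta>] by (simp add: rn_def)
    qed
    define \<epsilon> where "\<epsilon> = sqrt (2 * \<delta>\<^sup>2 * Kd + 2 * rn\<^sup>2)"
    have nn: "0 \<le> 2 * \<delta>\<^sup>2 * Kd + 2 * rn\<^sup>2" using Kd0 by (intro add_nonneg_nonneg mult_nonneg_nonneg) auto
    have eps0: "0 \<le> \<epsilon>" using nn by (simp add: \<epsilon>_def)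
    have epsle: "\<epsilon> \<le> \<epsilon>0"
    proof -
      have "rn\<^sup>2 \<le> \<delta>\<^sup>2" using rn0 rnd by (intro power_mono) auto
      then have "2 * \<delta>\<^sup>2 * Kd + 2 * rn\<^sup>2 \<le> (sq * \<delta>)\<^sup>2" using Kd0 by (simp add: sq_def power_mult_distrib algebra_simps)
      then have "\<epsilon> \<le> sq * \<delta>" unfolding \<epsilon>_def using sq0 \<delta> by (simp add: real_sqrt_le_iff real_le_lsqrt)
      also have "\<dots> \<le> sq * (\<epsilon>0 / sq)" using sq0 \<delta> by (intro mult_left_mono) (auto simp: \<delta>1_def)
      also have "\<dots> = \<epsilon>0" using sq0 by simp
      finally show ?thesis .
    qed
    have [measurable]: "(\<lambda>z. \<kappa>' (fst z) (snd z)) \<in> borel_measurable (lborel \<Otimes>\<^sub>M lborel)" by (rule kdot_meas)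
    have [measurable]: "(\<lambda>z. r \<delta> (fst z) (snd z)) \<in> borel_measurable (lborel \<Otimes>\<^sub>M lborel)" using r_meas \<delta>b by blast
    have pm: "kmeas p" unfolding kmeas_def p_def by measurable
    have psupp: "\<forall>x y. x \<notin> D \<or> y \<notin> D \<longrightarrow> p x y = 0" using kdot_supp r_supp \<delta>b by (auto simp: p_def)
    have pL2: "(\<integral>\<^sup>+z. ennreal ((p (fst z) (snd z))\<^sup>2) \<partial>(lborel \<Otimes>\<^sub>M lborel)) \<le> ennreal (\<epsilon>\<^sup>2)"
    proof -
      have ir: "integrable (lborel \<Otimes>\<^sub>M lborel) (\<lambda>z. (r \<delta> (fst z) (snd z))\<^sup>2)" using r_L2 \<delta>b by blast
      have "(\<integral>\<^sup>+z. ennreal ((p (fst z) (snd z))\<^sup>2) \<partial>(lborel \<Otimes>\<^sub>M lborel))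
          \<le> (\<integral>\<^sup>+z. ennreal (2 * \<delta>\<^sup>2 * (\<kappa>' (fst z) (snd z))\<^sup>2 + 2 * (r \<delta> (fst z) (snd z))\<^sup>2) \<partial>(lborel \<Otimes>\<^sub>M lborel))"
      proof (intro nn_integral_mono ennreal_leI)
        fix z
        have "0 \<le> (\<delta> * \<kappa>' (fst z) (snd z) - r \<delta> (fst z) (snd z))\<^sup>2" by simp
        then show "(p (fst z) (snd z))\<^sup>2 \<le> 2 * \<delta>\<^sup>2 * (\<kappa>' (fst z) (snd z))\<^sup>2 + 2 * (r \<delta> (fst z) (snd z))\<^sup>2"
          by (simp add: p_def power2_eq_square algebra_simps)
      qed
      also have "\<dots> = ennreal (\<integral>z. 2 * \<delta>\<^sup>2 * (\<kappa>' (fst z) (snd z))\<^sup>2 + 2 * (r \<delta> (fst z) (snd z))\<^sup>2 \<partial>(lborel \<Otimes>\<^sub>M lborel))"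
        using kdot_L2 ir by (intro nn_integral_eq_integral) auto
      also have "(\<integral>z. 2 * \<delta>\<^sup>2 * (\<kappa>' (fst z) (snd z))\<^sup>2 + 2 * (r \<delta> (fst z) (snd z))\<^sup>2 \<partial>(lborel \<Otimes>\<^sub>M lborel))
          = 2 * \<delta>\<^sup>2 * Kd + 2 * (\<integral>z. (r \<delta> (fst z) (snd z))\<^sup>2 \<partial>(lborel \<Otimes>\<^sub>M lborel))"
        using kdot_L2 ir by (simp add: Kd_def)
      also have "(\<integral>z. (r \<delta> (fst z) (snd z))\<^sup>2 \<partial>(lborel \<Otimes>\<^sub>M lborel)) = rn\<^sup>2"
        by (simp add: rn_def kernel_L2_norm_def)
      also have "2 * \<delta>\<^sup>2 * Kd + 2 * rn\<^sup>2 = \<epsilon>\<^sup>2" using nn by (simp add: \<epsilon>_def)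
      finally show ?thesis .
    qed
    have keq: "(\<lambda>x y. \<kappa> x y + \<delta> * \<kappa>' x y + r \<delta> x y) = (\<lambda>x y. \<kappa> x y + p x y)"
      by (simp add: p_def fun_eq_iff add.assoc)
    have pres: "\<forall>g. integrable lborel g \<longrightarrow> integrable lborel (transfer_op (\<lambda>x y. \<kappa> x y + p x y) g) \<longrightarrow>
            (\<integral>y. transfer_op (\<lambda>x y. \<kappa> x y + p x y) g y \<partial>lborel) = (\<integral>x. g x \<partial>lborel)"
    proof (intro allI impI)
      fix g assume g1: "integrable lborel g" and g2: "integrable lborel (transfer_op (\<lambda>x y. \<kappa> x y + p x y) g)"
      have pres0: "\<forall>g. integrable lborel g \<and> integrable lborel (transfer_op (\<lambda>x y. \<kappa> x y + p x y) g)
        \<longrightarrow> (\<integral>y. transfer_op (\<lambda>x y. \<kappa> x y + p x y) g y \<partial>lborel) = (\<integral>x. g x \<partial>lborel)"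
        using bspec[OF int_pres \<delta>b] unfolding keq .
      show "(\<integral>y. transfer_op (\<lambda>x y. \<kappa> x y + p x y) g y \<partial>lborel) = (\<integral>x. g x \<partial>lborel)"
        using pres0 g1 g2 by blast
    qed
    have res: "\<forall>n f. in_B D f \<longrightarrow> in_B D ((transfer_op (\<lambda>x y. \<kappa> x y + p x y) ^^ n) f) \<and>
            s_norm D ((transfer_op (\<lambda>x y. \<kappa> x y + p x y) ^^ n) f) \<le> A * lam ^ n * s_norm D f + B * L1_norm f"
    proof (rule PP)
      show "kmeas p \<and> (\<forall>x y. x \<notin> D \<or> y \<notin> D \<longrightarrow> p x y = 0)
      \<and> (\<integral>\<^sup>+z. ennreal ((p (fst z) (snd z))\<^sup>2) \<partial>(lborel \<Otimes>\<^sub>M lborel)) \<le> ennreal (\<epsilon>\<^sup>2)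
      \<and> 0 \<le> \<epsilon> \<and> \<epsilon> \<le> \<epsilon>0
      \<and> (\<forall>g. integrable lborel g \<longrightarrow> integrable lborel (transfer_op (\<lambda>x y. \<kappa> x y + p x y) g) \<longrightarrow>
            (\<integral>y. transfer_op (\<lambda>x y. \<kappa> x y + p x y) g y \<partial>lborel) = (\<integral>x. g x \<partial>lborel))"
        by (intro conjI pm psupp pL2 eps0 epsle pres)
    qed
    show "let L = transfer_op (\<lambda>x y. \<kappa> x y + \<delta> * \<kappa>' x y + r \<delta> x y) in
          in_B D ((L ^^ n) f) \<and> s_norm D ((L ^^ n) f) \<le> A * lam ^ n * s_norm D f + B * L1_norm f"
      unfolding Let_def keq by (rule res[rule_format, OF f])
  qed
qed


end
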